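(* Let $n\ge 1$. Consider any circuit topology on $n$ qubits built from one-qubit rotation gates (each carrying one real angle parameter), fixed gates, and parameterized Mølmer–Sørensen gates (each carrying one real parameter), and let $f:\mathbb{R}^k\to\mathcal{U}(2^n)$ be the smooth map sending the parameters to the implemented unitary. If for every unit vector $\ket{\psi}\in\mathbb{C}^{2^n}$ there exists $x\in\mathbb{R}^k$ with $f(x)\ket{0}^{\otimes n}=\ket{\psi}$ up to a global phase (i.e. the topology can prepare every $n$-qubit quantum state from $\ket{0\cdots0}$), then the number of MS gates in the topology is at least $$\left\lceil \frac{2^{n+1}-2n-2}{2n+1}\right\rceil .$$ *)

theory Defs
  imports Complex_Main "Jordan_Normal_Form.Matrix"
begin

text \<open>Qubit circuits on n qubits. Basis states of (C^2)^{\<otimes>n} are indexed by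
  r < 2^n; qubit q of basis state r is bit q of r.\<close>

definition qbit :: "nat \<Rightarrow> nat \<Rightarrow> nat" where
  "qbit r q = (r div 2 ^ q) mod 2"

datatype pauli = PX | PY | PZ

text \<open>One-qubit rotation R_P(theta) = exp(-i theta P / 2) as a 2x2 matrix.\<close>
definition rot2 :: "pauli \<Rightarrow> real \<Rightarrow> complex mat" where
  "rot2 P t = (case P of
      PX \<Rightarrow> mat 2 2 (\<lambda>(i,j). if i = j then complex_of_real (cos (t/2))
                            else - \<i> * complex_of_real (sin (t/2)))
    | PY \<Rightarrow> mat 2 2 (\<lambda>(i,j). if i = j then complex_of_real (cos (t/2))
                            else if i = 0 then - complex_of_real (sin (t/2))
                            else complex_of_real (sin (t/2)))
    | PZ \<Rightarrow> mat 2 2 (\<lambda>(i,j). if i \<noteq> j then 0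
                            else if i = 0 then cis (- t/2) else cis (t/2)))"

definition adj2 :: "complex mat \<Rightarrow> complex mat" where
  "adj2 U = mat (dim_col U) (dim_row U) (\<lambda>(i,j). cnj (U $$ (j,i)))"

definition unitary2 :: "complex mat \<Rightarrow> bool" where
  "unitary2 U \<longleftrightarrow> U \<in> carrier_mat 2 2 \<and> U * adj2 U = 1\<^sub>m 2"

definition on_qubit :: "nat \<Rightarrow> nat \<Rightarrow> complex mat \<Rightarrow> complex mat" where
  "on_qubit n q U = mat (2^n) (2^n) (\<lambda>(r,c).
      if (\<forall>i. i \<noteq> q \<longrightarrow> qbit r i = qbit c i) then U $$ (qbit r q, qbit c q) else 0)"

text \<open>Parameterized Moelmer-Soerensen gate on qubits a, b:
  MS(theta) = exp(-i theta X_a X_b / 2) = cos(theta/2) I - i sin(theta/2) X_a X_b.\<close>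
definition ms_gate :: "nat \<Rightarrow> nat \<Rightarrow> nat \<Rightarrow> real \<Rightarrow> complex mat" where
  "ms_gate n a b t = mat (2^n) (2^n) (\<lambda>(r,c).
      if r = c then complex_of_real (cos (t/2))
      else if (\<forall>i. qbit r i \<noteq> qbit c i \<longleftrightarrow> i = a \<or> i = b)
        then - \<i> * complex_of_real (sin (t/2)) else 0)"

datatype gate = Rot pauli nat | Fixed "complex mat" nat | MS nat nat

definition wf_gate :: "nat \<Rightarrow> gate \<Rightarrow> bool" where
  "wf_gate n g = (case g of
      Rot P q \<Rightarrow> q < n
    | Fixed U q \<Rightarrow> q < n \<and> unitary2 U
    | MS a b \<Rightarrow> a < n \<and> b < n \<and> a \<noteq> b)"

fun is_param :: "gate \<Rightarrow> bool" where
  "is_param (Rot _ _) = True"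
| "is_param (Fixed _ _) = False"
| "is_param (MS _ _) = True"

fun is_ms :: "gate \<Rightarrow> bool" where
  "is_ms (MS _ _) = True"
| "is_ms _ = False"

definition num_params :: "gate list \<Rightarrow> nat" where
  "num_params gs = length (filter is_param gs)"

definition num_ms :: "gate list \<Rightarrow> nat" where
  "num_ms gs = length (filter is_ms gs)"

text \<open>The implemented unitary f(x): gates are applied in list order (the first
  gate acts first), parameters are consumed in order from the list x.\<close>
fun circ :: "nat \<Rightarrow> gate list \<Rightarrow> real list \<Rightarrow> complex mat" where
  "circ n [] xs = 1\<^sub>m (2^n)"
| "circ n (Rot P q # gs) xs = circ n gs (tl xs) * on_qubit n q (rot2 P (hd xs))"
| "circ n (Fixed U q # gs) xs = circ n gs xs * on_qubit n q U"
| "circ n (MS a b # gs) xs = circ n gs (tl xs) * ms_gate n a b (hd xs)"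

definition unit_state :: "nat \<Rightarrow> complex vec \<Rightarrow> bool" where
  "unit_state n \<psi> \<longleftrightarrow> dim_vec \<psi> = 2^n \<and> (\<Sum>i<2^n. (cmod (\<psi> $ i))\<^sup>2) = 1"

end

theory Submission
  imports Defs "HOL-Library.FuncSet"
begin


lemma qbit_bit: "qbit r i = (if bit r i then 1 else 0)"
  by (simp add: qbit_def bit_iff_odd odd_iff_mod_2_eq_one)

lemma lt_pow_iff: "(x::nat) < 2^n \<longleftrightarrow> (\<forall>i\<ge>n. \<not> bit x i)"
proof -
  have "x < 2^n \<longleftrightarrow> take_bit n x = x" by (simp only: take_bit_nat_eq_self_iff)
  also have "\<dots> \<longleftrightarrow> (\<forall>i\<ge>n. \<not> bit x i)"
  proof
    assume h: "take_bit n x = x"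
    show "\<forall>i\<ge>n. \<not> bit x i"
    proof (intro allI impI)
      fix i assume "n \<le> i"
      then have "\<not> bit (take_bit n x) i" by (simp add: bit_take_bit_iff)
      then show "\<not> bit x i" using h by simp
    qed
  next
    assume h: "\<forall>i\<ge>n. \<not> bit x i"
    show "take_bit n x = x"
    proof (rule bit_eqI)
      fix m show "bit (take_bit n x) m = bit x m"
        using h by (cases "m < n") (auto simp: bit_take_bit_iff)
    qed
  qed
  finally show ?thesis .
qed

lemma bit_qbit: "bit r i \<longleftrightarrow> qbit r i = 1"
  by (simp add: qbit_bit)
lemma qbit_eq_iff: "(\<forall>i. qbit r i = qbit c i) \<longleftrightarrow> r = c"
proof
  assume h: "\<forall>i. qbit r i = qbit c i"
  show "r = c" by (rule bit_eqI) (simp add: bit_qbit h)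
qed simp

lemma set_bit_lt: "(r::nat) < 2^n \<Longrightarrow> q < n \<Longrightarrow> set_bit q r < 2^n"
  by (auto simp: lt_pow_iff bit_set_bit_iff)
lemma unset_bit_lt: "(r::nat) < 2^n \<Longrightarrow> unset_bit q r < 2^n"
  by (auto simp: lt_pow_iff bit_unset_bit_iff)
lemma flip_bit_lt: "(r::nat) < 2^n \<Longrightarrow> q < n \<Longrightarrow> flip_bit q r < 2^n"
  by (auto simp: lt_pow_iff bit_flip_bit_iff)

lemma qbit_set: "qbit (set_bit q (r::nat)) i = (if i = q then 1 else qbit r i)"
  by (auto simp: qbit_bit bit_set_bit_iff)
lemma qbit_unset: "qbit (unset_bit q (r::nat)) i = (if i = q then 0 else qbit r i)"
  by (auto simp: qbit_bit bit_unset_bit_iff)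
lemma qbit_flip: "qbit (flip_bit q (r::nat)) i = (if i = q then 1 - qbit r i else qbit r i)"
  by (auto simp: qbit_bit bit_flip_bit_iff)
lemma qbit_le1: "qbit r i \<le> 1" by (simp add: qbit_bit)


lemma onq_set: 
  assumes "r < 2^n" "q < n"
  shows "{c. c < 2^n \<and> (\<forall>i. i \<noteq> q \<longrightarrow> qbit r i = qbit c i)} = {unset_bit q r, set_bit q r}"
proof (intro equalityI subsetI)
  fix c assume "c \<in> {c. c < 2^n \<and> (\<forall>i. i \<noteq> q \<longrightarrow> qbit r i = qbit c i)}"
  then have h: "\<forall>i. i \<noteq> q \<longrightarrow> qbit r i = qbit c i" by auto
  show "c \<in> {unset_bit q r, set_bit q r}"
  proof (cases "qbit c q = 0")
    case True
    then have "\<forall>i. qbit (unset_bit q r) i = qbit c i" using h by (auto simp: qbit_unset)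
    then show ?thesis by (simp add: qbit_eq_iff)
  next
    case False
    then have "qbit c q = 1" using qbit_le1[of c q] by linarith
    then have "\<forall>i. qbit (set_bit q r) i = qbit c i" using h by (auto simp: qbit_set)
    then show ?thesis by (simp add: qbit_eq_iff)
  qed
next
  fix c assume "c \<in> {unset_bit q r, set_bit q r}"
  then show "c \<in> {c. c < 2^n \<and> (\<forall>i. i \<noteq> q \<longrightarrow> qbit r i = qbit c i)}"
    using assms by (auto simp: qbit_set qbit_unset set_bit_lt unset_bit_lt)
qed

lemma unset_ne_set: "unset_bit q (r::nat) \<noteq> set_bit q r"
  by (metis qbit_set qbit_unset zero_neq_one)

definition flip2 :: "nat \<Rightarrow> nat \<Rightarrow> nat \<Rightarrow> nat" where
  "flip2 a b r = flip_bit a (flip_bit b r)"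

lemma qbit_flip2: "a \<noteq> b \<Longrightarrow> qbit (flip2 a b r) i = (if i = a \<or> i = b then 1 - qbit r i else qbit r i)"
  by (auto simp: flip2_def qbit_flip)

lemma ms_set:
  assumes "r < 2^n" "a < n" "b < n" "a \<noteq> b"
  shows "{c. c < 2^n \<and> c \<noteq> r \<and> (\<forall>i. qbit r i \<noteq> qbit c i \<longleftrightarrow> i = a \<or> i = b)} = {flip2 a b r}"
proof (intro equalityI subsetI)
  fix c assume "c \<in> {c. c < 2^n \<and> c \<noteq> r \<and> (\<forall>i. qbit r i \<noteq> qbit c i \<longleftrightarrow> i = a \<or> i = b)}"
  then have h: "\<forall>i. qbit r i \<noteq> qbit c i \<longleftrightarrow> i = a \<or> i = b" by auto
  have "\<forall>i. qbit (flip2 a b r) i = qbit c i"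
  proof
    fix i show "qbit (flip2 a b r) i = qbit c i"
      using h[rule_format, of i] qbit_le1[of r i] qbit_le1[of c i] assms(4)
      by (auto simp: qbit_flip2)
  qed
  then show "c \<in> {flip2 a b r}" by (simp add: qbit_eq_iff)
next
  fix c assume "c \<in> {flip2 a b r}"
  then have c: "c = flip2 a b r" by simp
  have q: "\<forall>i. qbit r i \<noteq> qbit c i \<longleftrightarrow> i = a \<or> i = b"
  proof
    fix i 
      have "qbit c i = (if i = a \<or> i = b then 1 - qbit r i else qbit r i)"
        using assms(4) by (simp add: c qbit_flip2)
      then show "qbit r i \<noteq> qbit c i \<longleftrightarrow> i = a \<or> i = b"
        by (auto simp: qbit_bit)
  qed
  have cr: "c \<noteq> r"
  proof
    assume "c = r" with q show False by blast
  qed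
  have cl: "c < 2^n" unfolding c flip2_def by (intro flip_bit_lt) (use assms in auto)
  show "c \<in> {c. c < 2^n \<and> c \<noteq> r \<and> (\<forall>i. qbit r i \<noteq> qbit c i \<longleftrightarrow> i = a \<or> i = b)}"
    unfolding mem_Collect_eq using cr cl q by (intro conjI)
qed



type_synonym st = "nat \<Rightarrow> complex"

definition ap1 :: "nat \<Rightarrow> (nat \<Rightarrow> nat \<Rightarrow> complex) \<Rightarrow> st \<Rightarrow> st" where
  "ap1 q A w r = A (qbit r q) 0 * w (unset_bit q r) + A (qbit r q) 1 * w (set_bit q r)"

definition apMS :: "nat \<Rightarrow> nat \<Rightarrow> complex \<Rightarrow> complex \<Rightarrow> st \<Rightarrow> st" where
  "apMS a b co si w r = co * w r - \<i> * si * w (flip2 a b r)"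

lemma sum_two_points:
  assumes "finite S" "{c\<in>S. P c} = {x, y}" "x \<noteq> y"
  shows "(\<Sum>c\<in>S. (if P c then f c else 0)) = f x + f y"
proof -
  have "(\<Sum>c\<in>S. (if P c then f c else 0)) = (\<Sum>c\<in>{c\<in>S. P c}. f c)"
    using assms(1) by (simp add: sum.inter_filter)
  also have "\<dots> = f x + f y" using assms(2,3) by simp
  finally show ?thesis .
qed

lemma matvec1:
  assumes "q < n" "dim_vec v = 2^n"
  shows "on_qubit n q U *\<^sub>v v = vec (2^n) (ap1 q (\<lambda>i j. U $$ (i,j)) (\<lambda>r. v $ r))"
proof (rule eq_vecI)
  show "dim_vec (on_qubit n q U *\<^sub>v v) = dim_vec (vec (2 ^ n) (ap1 q (\<lambda>i j. U $$ (i, j)) (($) v)))"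
    by (simp add: on_qubit_def)
  fix r assume r: "r < dim_vec (vec (2 ^ n) (ap1 q (\<lambda>i j. U $$ (i, j)) (($) v)))"
  then have r: "r < 2^n" by simp
  have "(on_qubit n q U *\<^sub>v v) $ r = (\<Sum>c\<in>{0..<2^n}. (if (\<forall>i. i \<noteq> q \<longrightarrow> qbit r i = qbit c i) then U $$ (qbit r q, qbit c q) * v $ c else 0))"
    using r assms by (auto simp: on_qubit_def scalar_prod_def intro!: sum.cong)
  also have "\<dots> = U $$ (qbit r q, qbit (unset_bit q r) q) * v $ (unset_bit q r) + U $$ (qbit r q, qbit (set_bit q r) q) * v $ (set_bit q r)"
    by (rule sum_two_points) (use onq_set[OF r assms(1)] unset_ne_set in auto)
  also have "\<dots> = ap1 q (\<lambda>i j. U $$ (i,j)) (\<lambda>r. v $ r) r"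
    by (simp add: ap1_def qbit_set qbit_unset)
  finally show "(on_qubit n q U *\<^sub>v v) $ r = vec (2 ^ n) (ap1 q (\<lambda>i j. U $$ (i, j)) (($) v)) $ r"
    using r by simp
qed

lemma matvecMS:
  assumes "a < n" "b < n" "a \<noteq> b" "dim_vec v = 2^n"
  shows "ms_gate n a b t *\<^sub>v v = vec (2^n) (apMS a b (complex_of_real (cos (t/2))) (complex_of_real (sin (t/2))) (\<lambda>r. v $ r))"
proof (rule eq_vecI)
  show "dim_vec (ms_gate n a b t *\<^sub>v v) = dim_vec (vec (2^n) (apMS a b (complex_of_real (cos (t/2))) (complex_of_real (sin (t/2))) (\<lambda>r. v $ r)))"
    by (simp add: ms_gate_def)
  fix r assume r: "r < dim_vec (vec (2^n) (apMS a b (complex_of_real (cos (t/2))) (complex_of_real (sin (t/2))) (\<lambda>r. v $ r)))"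
  then have r: "r < 2^n" by simp
  let ?co = "complex_of_real (cos (t/2))" and ?si = "complex_of_real (sin (t/2))"
  let ?P = "\<lambda>c. (\<forall>i. qbit r i \<noteq> qbit c i \<longleftrightarrow> i = a \<or> i = b)"
  have "(ms_gate n a b t *\<^sub>v v) $ r = (\<Sum>c\<in>{0..<2^n}. (if c = r then ?co * v $ c else 0) + (if c \<noteq> r \<and> ?P c then - \<i> * ?si * v $ c else 0))"
    using r assms by (auto simp: ms_gate_def scalar_prod_def intro!: sum.cong)
  also have "\<dots> = (\<Sum>c\<in>{0..<2^n}. (if c = r then ?co * v $ c else 0)) + (\<Sum>c\<in>{0..<2^n}. (if c \<noteq> r \<and> ?P c then - \<i> * ?si * v $ c else 0))"
    by (rule sum.distrib)
  also have "(\<Sum>c\<in>{0..<2^n}. (if c = r then ?co * v $ c else 0)) = ?co * v $ r"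
    using r by (simp add: sum.delta)
  also have "(\<Sum>c\<in>{0..<2^n}. (if c \<noteq> r \<and> ?P c then - \<i> * ?si * v $ c else 0))
      = (\<Sum>c\<in>{c\<in>{0..<2^n}. c \<noteq> r \<and> ?P c}. - \<i> * ?si * v $ c)"
    by (rule sum.inter_filter[symmetric]) simp
  also have "{c\<in>{0..<2^n}. c \<noteq> r \<and> ?P c} = {flip2 a b r}"
    using ms_set[OF r assms(1-3)] by auto
  finally show "(ms_gate n a b t *\<^sub>v v) $ r = vec (2^n) (apMS a b ?co ?si (\<lambda>r. v $ r)) $ r"
    using r by (simp add: apMS_def)
qed




lemma bitc1[simp]: "unset_bit q (unset_bit q (r::nat)) = unset_bit q r" by (rule bit_eqI) (auto simp: bit_set_bit_iff bit_unset_bit_iff bit_flip_bit_iff flip2_def)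
lemma bitc2[simp]: "set_bit q (unset_bit q (r::nat)) = set_bit q r" by (rule bit_eqI) (auto simp: bit_set_bit_iff bit_unset_bit_iff bit_flip_bit_iff flip2_def)
lemma bitc3[simp]: "unset_bit q (set_bit q (r::nat)) = unset_bit q r" by (rule bit_eqI) (auto simp: bit_set_bit_iff bit_unset_bit_iff bit_flip_bit_iff flip2_def)
lemma bitc4[simp]: "set_bit q (set_bit q (r::nat)) = set_bit q r" by (rule bit_eqI) (auto simp: bit_set_bit_iff bit_unset_bit_iff bit_flip_bit_iff flip2_def)
lemma bitc5: "p \<noteq> q \<Longrightarrow> unset_bit p (unset_bit q (r::nat)) = unset_bit q (unset_bit p r)" by (rule bit_eqI) (auto simp: bit_set_bit_iff bit_unset_bit_iff bit_flip_bit_iff flip2_def)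
lemma bitc6: "p \<noteq> q \<Longrightarrow> unset_bit p (set_bit q (r::nat)) = set_bit q (unset_bit p r)" by (rule bit_eqI) (auto simp: bit_set_bit_iff bit_unset_bit_iff bit_flip_bit_iff flip2_def)
lemma bitc7: "p \<noteq> q \<Longrightarrow> set_bit p (set_bit q (r::nat)) = set_bit q (set_bit p r)" by (rule bit_eqI) (auto simp: bit_set_bit_iff bit_unset_bit_iff bit_flip_bit_iff flip2_def)
lemma bitc8: "q \<noteq> a \<Longrightarrow> q \<noteq> b \<Longrightarrow> unset_bit q (flip2 a b (r::nat)) = flip2 a b (unset_bit q r)" by (rule bit_eqI) (auto simp: bit_set_bit_iff bit_unset_bit_iff bit_flip_bit_iff flip2_def)
lemma bitc9: "q \<noteq> a \<Longrightarrow> q \<noteq> b \<Longrightarrow> set_bit q (flip2 a b (r::nat)) = flip2 a b (set_bit q r)" by (rule bit_eqI) (auto simp: bit_set_bit_iff bit_unset_bit_iff bit_flip_bit_iff flip2_def)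
lemma qbit_flip2_other: "q \<noteq> a \<Longrightarrow> q \<noteq> b \<Longrightarrow> qbit (flip2 a b r) q = qbit r q"
  by (auto simp: qbit_bit bit_flip_bit_iff flip2_def)

lemma ap1_comm: "p \<noteq> q \<Longrightarrow> ap1 q A (ap1 p B w) = ap1 p B (ap1 q A w)"
  by (rule ext) (simp add: ap1_def qbit_set qbit_unset bitc5 bitc6 bitc7 algebra_simps)

lemma ap1_MS_comm: "q \<noteq> a \<Longrightarrow> q \<noteq> b \<Longrightarrow> ap1 q A (apMS a b co si w) = apMS a b co si (ap1 q A w)"
  by (rule ext) (simp add: ap1_def apMS_def qbit_flip2_other bitc8 bitc9 algebra_simps)

definition mm :: "(nat \<Rightarrow> nat \<Rightarrow> complex) \<Rightarrow> (nat \<Rightarrow> nat \<Rightarrow> complex) \<Rightarrow> nat \<Rightarrow> nat \<Rightarrow> complex" where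
  "mm A B i j = A i 0 * B 0 j + A i 1 * B 1 j"

lemma ap1_ap1: "ap1 q A (ap1 q B w) = ap1 q (mm A B) w"
  by (rule ext) (simp add: ap1_def mm_def qbit_set qbit_unset algebra_simps)

lemma ap1_smult_mat: "ap1 q (\<lambda>i j. c * A i j) w = (\<lambda>r. c * ap1 q A w r)"
  by (rule ext) (simp add: ap1_def algebra_simps)
lemma ap1_smult_vec: "ap1 q A (\<lambda>r. c * w r) = (\<lambda>r. c * ap1 q A w r)"
  by (rule ext) (simp add: ap1_def algebra_simps)
lemma apMS_smult_vec: "apMS a b co si (\<lambda>r. c * w r) = (\<lambda>r. c * apMS a b co si w r)"
  by (rule ext) (simp add: apMS_def algebra_simps)



definition unit2 :: "complex \<Rightarrow> complex \<Rightarrow> bool" where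
  "unit2 a b \<longleftrightarrow> a * cnj a + b * cnj b = 1"

definition sa :: "complex \<Rightarrow> complex \<Rightarrow> nat \<Rightarrow> nat \<Rightarrow> complex" where
  "sa a b i j = (if i = 0 then (if j = 0 then a else b) else (if j = 0 then - cnj b else cnj a))"

definition urow :: "(nat \<Rightarrow> nat \<Rightarrow> complex) \<Rightarrow> bool" where
  "urow U \<longleftrightarrow> U 0 0 * cnj (U 0 0) + U 0 1 * cnj (U 0 1) = 1 \<and>
              U 1 0 * cnj (U 1 0) + U 1 1 * cnj (U 1 1) = 1 \<and>
              U 0 0 * cnj (U 1 0) + U 0 1 * cnj (U 1 1) = 0"

lemma urow_decomp:
  assumes "urow U"
  shows "\<exists>\<mu> a' b'. cmod \<mu> = 1 \<and> unit2 a' b' \<and> (\<forall>i\<le>1. \<forall>j\<le>1. U i j = \<mu> * sa a' b' i j)"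
proof -
  define a where "a = U 0 0" define b where "b = U 0 1"
  define c where "c = U 1 0" define d where "d = U 1 1"
  have r1: "a * cnj a + b * cnj b = 1" and r2: "c * cnj c + d * cnj d = 1" and r3: "a * cnj c + b * cnj d = 0"
    using assms by (auto simp: urow_def a_def b_def c_def d_def)
  have r3': "c * cnj a + d * cnj b = 0"
  proof -
    have "cnj (a * cnj c + b * cnj d) = c * cnj a + d * cnj b" by (simp add: mult.commute)
    then show ?thesis using r3 by simp
  qed
  define l where "l = a * d - b * c"
  have cd: "c * cnj a = - (d * cnj b)" using r3' by (simp only: eq_neg_iff_add_eq_0)
  have dc: "d * cnj b = - (c * cnj a)" by (simp add: cd)
  have hc: "c = - l * cnj b"
  proof -
    have "- l * cnj b = - a * (d * cnj b) + c * (b * cnj b)" by (simp add: l_def algebra_simps)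
    also have "\<dots> = c * (a * cnj a + b * cnj b)" by (simp add: dc algebra_simps)
    finally show ?thesis using r1 by simp
  qed
  have hd: "d = l * cnj a"
  proof -
    have "l * cnj a = d * (a * cnj a) - b * (c * cnj a)" by (simp add: l_def algebra_simps)
    also have "\<dots> = d * (a * cnj a + b * cnj b)" by (simp add: cd algebra_simps)
    finally show ?thesis using r1 by simp
  qed
  have ll: "l * cnj l = 1"
  proof -
    have "c * cnj c + d * cnj d = (l * cnj l) * (a * cnj a + b * cnj b)"
      by (simp add: hc hd algebra_simps)
    then show ?thesis using r1 r2 by simp
  qed
  have cl: "cmod l = 1"
  proof -
    have "complex_of_real ((cmod l)^2) = 1" using ll by (simp only: complex_norm_square)
    then have "(cmod l)^2 = 1" by (metis of_real_eq_1_iff)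
    then show ?thesis using norm_ge_zero[of l] by (auto simp add: power2_eq_1_iff)
  qed
  define \<mu> where "\<mu> = cis (Arg l / 2)"
  have m1: "cmod \<mu> = 1" by (simp add: \<mu>_def)
  have mm1: "\<mu> * cnj \<mu> = 1" by (simp add: \<mu>_def cis_cnj cis_mult)
  have msq: "\<mu> * \<mu> = l"
  proof -
    have "l \<noteq> 0" using cl by auto
    then have "cis (Arg l) = l" using cl by (simp add: cis_Arg sgn_div_norm)
    then show ?thesis by (simp add: \<mu>_def cis_mult)
  qed
  define a' where "a' = a * cnj \<mu>"
  define b' where "b' = b * cnj \<mu>"
  have "unit2 a' b'"
  proof -
    have "a' * cnj a' + b' * cnj b' = (a * cnj a + b * cnj b) * (\<mu> * cnj \<mu>)"
      by (simp add: a'_def b'_def algebra_simps)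
    then show ?thesis using r1 mm1 by (simp add: unit2_def)
  qed
  moreover have "\<forall>i\<le>1. \<forall>j\<le>1. U i j = \<mu> * sa a' b' i j"
  proof (intro allI impI)
    fix i j :: nat assume i: "i \<le> 1" and j: "j \<le> 1"
    have e1: "\<mu> * a' = a"
    proof -
      have "\<mu> * a' = a * (\<mu> * cnj \<mu>)" by (simp add: a'_def ac_simps)
      then show ?thesis using mm1 by simp
    qed
    have e2: "\<mu> * b' = b"
    proof -
      have "\<mu> * b' = b * (\<mu> * cnj \<mu>)" by (simp add: b'_def ac_simps)
      then show ?thesis using mm1 by simp
    qed
    have e3: "\<mu> * (- cnj b') = c"
    proof -
      have "\<mu> * (- cnj b') = - (\<mu> * \<mu>) * cnj b" by (simp add: b'_def ac_simps)
      then show ?thesis using msq hc by simp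
    qed
    have e4: "\<mu> * cnj a' = d"
    proof -
      have "\<mu> * cnj a' = (\<mu> * \<mu>) * cnj a" by (simp add: a'_def ac_simps)
      then show ?thesis using msq hd by simp
    qed
    have "i = 0 \<or> i = 1" "j = 0 \<or> j = 1" using i j by auto
    then show "U i j = \<mu> * sa a' b' i j"
    proof (elim disjE)
      assume "i = 0" "j = 0" then show ?thesis using e1 by (simp add: sa_def a_def)
    next
      assume "i = 0" "j = 1" then show ?thesis using e2 by (simp add: sa_def b_def)
    next
      assume "i = 1" "j = 0" then show ?thesis using e3 by (simp add: sa_def c_def)
    next
      assume "i = 1" "j = 1" then show ?thesis using e4 by (simp add: sa_def d_def)
    qed
  qed
  ultimately show ?thesis using m1 by blast
qed

lemma mm_sa:
  assumes "\<forall>i\<le>1. \<forall>j\<le>1. U i j = \<mu> * sa a1 b1 i j" "i \<le> 1" "j \<le> 1"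
  shows "mm U (sa a b) i j = \<mu> * sa (a1 * a - b1 * cnj b) (a1 * b + b1 * cnj a) i j"
proof -
  have "i = 0 \<or> i = 1" "j = 0 \<or> j = 1" using assms(2,3) by auto
  then show ?thesis using assms(1)
    by (auto simp: mm_def sa_def algebra_simps)
qed

lemma unit2_mult: "unit2 a1 b1 \<Longrightarrow> unit2 a b \<Longrightarrow> unit2 (a1 * a - b1 * cnj b) (a1 * b + b1 * cnj a)"
proof -
  assume "unit2 a1 b1" "unit2 a b"
  moreover have "(a1 * a - b1 * cnj b) * cnj (a1 * a - b1 * cnj b) + (a1 * b + b1 * cnj a) * cnj (a1 * b + b1 * cnj a)
      = (a1 * cnj a1 + b1 * cnj b1) * (a * cnj a + b * cnj b)"
    by (simp add: algebra_simps)
  ultimately show ?thesis by (simp add: unit2_def)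
qed

lemma unit2_apply:
  assumes "\<forall>i\<le>1. \<forall>j\<le>1. U i j = \<mu> * sa a1 b1 i j" "cmod \<mu> = 1" "unit2 a1 b1" "unit2 p s"
  shows "unit2 (U 0 0 * p + U 0 1 * s) (U 1 0 * p + U 1 1 * s)"
proof -
  have mm1: "\<mu> * cnj \<mu> = 1"
    using assms(2) by (metis complex_norm_square mult.commute of_real_1 power_one)
  have "(U 0 0 * p + U 0 1 * s) * cnj (U 0 0 * p + U 0 1 * s) + (U 1 0 * p + U 1 1 * s) * cnj (U 1 0 * p + U 1 1 * s)
    = (\<mu> * cnj \<mu>) * ((a1 * cnj a1 + b1 * cnj b1) * (p * cnj p + s * cnj s))"
    using assms(1) by (simp add: sa_def algebra_simps)
  then show ?thesis using assms mm1 by (simp add: unit2_def)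
qed

lemma unit2_angles:
  assumes "unit2 a b"
  shows "\<exists>t u v. \<bar>t\<bar> \<le> pi \<and> \<bar>u\<bar> \<le> pi \<and> \<bar>v\<bar> \<le> pi \<and>
     a = complex_of_real (cos t) * cis u \<and> b = complex_of_real (sin t) * cis v"
proof -
  have "complex_of_real ((cmod a)^2 + (cmod b)^2) = a * cnj a + b * cnj b"
    by (simp only: of_real_add complex_norm_square)
  then have "complex_of_real ((cmod a)^2 + (cmod b)^2) = 1"
    using assms by (simp add: unit2_def)
  then have s: "(cmod a)^2 + (cmod b)^2 = 1" by (metis of_real_eq_1_iff)
  then have ca: "cmod a \<le> 1"
    by (metis abs_norm_cancel abs_square_le_1 le_add_same_cancel1 zero_le_power2)
  define t where "t = arccos (cmod a)"
  have ct: "cos t = cmod a" using ca by (simp add: t_def cos_arccos_abs)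
  have st: "sin t = cmod b"
  proof -
    have m1: "-1 \<le> cmod a" by (rule order_trans[of _ 0]) auto
    have "sin t = sqrt (1 - (cmod a)^2)" using ca m1 by (simp add: t_def sin_arccos)
    also have "\<dots> = sqrt ((cmod b)^2)" using s by (metis add_diff_cancel_left')
    finally show ?thesis by simp
  qed
  have "-1 \<le> cmod a" by (rule order_trans[of _ 0]) auto
  then have "0 \<le> t" "t \<le> pi" using ca unfolding t_def by (auto intro: arccos_lbound arccos_ubound)
  then have tb: "\<bar>t\<bar> \<le> pi" by simp
  have a: "a = complex_of_real (cos t) * cis (Arg a)"
    using ct by (metis rcis_cmod_Arg rcis_def)
  have b: "b = complex_of_real (sin t) * cis (Arg b)"
    using st by (metis rcis_cmod_Arg rcis_def)
  have "\<bar>Arg a\<bar> \<le> pi" "\<bar>Arg b\<bar> \<le> pi" using Arg_bounded[of a] Arg_bounded[of b] by auto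
  then show ?thesis using tb a b by blast
qed

lemma cis_Arg_cis: "cis (Arg (cis s)) = cis s"
  by (simp add: cis_Arg sgn_div_norm)

lemma cos_Arg_cis: "cos (Arg (cis s)) = cos s"
  using arg_cong[OF cis_Arg_cis[of s], of Re] by simp
lemma sin_Arg_cis: "sin (Arg (cis s)) = sin s"
  using arg_cong[OF cis_Arg_cis[of s], of Im] by simp

lemma Arg_cis_bound: "\<bar>Arg (cis s)\<bar> \<le> pi"
  using Arg_bounded[of "cis s"] by auto

lemma unit2_prod:
  assumes "unit2 a b"
  shows "\<exists>c t v. cmod c = 1 \<and> \<bar>t\<bar> \<le> pi \<and> \<bar>v\<bar> \<le> pi \<and>
     a = c * complex_of_real (cos t) \<and> b = c * (complex_of_real (sin t) * cis v)"
proof -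
  obtain t u v where h: "\<bar>t\<bar> \<le> pi" "\<bar>u\<bar> \<le> pi" "\<bar>v\<bar> \<le> pi"
     "a = complex_of_real (cos t) * cis u" "b = complex_of_real (sin t) * cis v"
    using unit2_angles[OF assms] by blast
  have "b = cis u * (complex_of_real (sin t) * cis (Arg (cis (v - u))))"
    using h(5) by (simp add: cis_Arg_cis cis_mult)
  then show ?thesis using h Arg_cis_bound[of "v - u"]
    by (intro exI[of _ "cis u"] exI[of _ t] exI[of _ "Arg (cis (v - u))"]) (auto simp: mult.commute)
qed




definition pf :: "(nat \<Rightarrow> real) \<Rightarrow> nat \<Rightarrow> nat \<Rightarrow> complex" where
  "pf x i k = (if k = 0 then complex_of_real (cos (x (2*i)))
               else complex_of_real (sin (x (2*i))) * cis (x (2*i+1)))"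

definition Pst :: "nat \<Rightarrow> (nat \<Rightarrow> real) \<Rightarrow> st" where
  "Pst n x r = (\<Prod>i<n. pf x i (qbit r i))"

definition su :: "real \<Rightarrow> real \<Rightarrow> real \<Rightarrow> nat \<Rightarrow> nat \<Rightarrow> complex" where
  "su t u v = sa (complex_of_real (cos t) * cis u) (complex_of_real (sin t) * cis v)"

fun G :: "nat \<Rightarrow> (nat \<times> nat) list \<Rightarrow> (nat \<Rightarrow> real) \<Rightarrow> st" where
  "G n [] x = Pst n x"
| "G n ((a,b)#ps) x =
     ap1 a (su (x (2*n+7*length ps+1)) (x (2*n+7*length ps+2)) (x (2*n+7*length ps+3)))
      (ap1 b (su (x (2*n+7*length ps+4)) (x (2*n+7*length ps+5)) (x (2*n+7*length ps+6)))
        (apMS a b (complex_of_real (cos (x (2*n+7*length ps)))) (complex_of_real (sin (x (2*n+7*length ps))))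
           (G n ps x)))"

definition box :: "(nat \<Rightarrow> real) \<Rightarrow> bool" where
  "box x \<longleftrightarrow> (\<forall>j. \<bar>x j\<bar> \<le> pi)"

definition valid :: "nat \<Rightarrow> (nat \<times> nat) list \<Rightarrow> bool" where
  "valid n ps \<longleftrightarrow> (\<forall>(a,b)\<in>set ps. a < n \<and> b < n \<and> a \<noteq> b)"

lemma cs1: "complex_of_real (cos t) * complex_of_real (cos t) + complex_of_real (sin t) * complex_of_real (sin t) = 1"
  by (metis of_real_1 of_real_add of_real_mult sin_cos_squared_add3)

lemma cis_cnj1: "cis u * cnj (cis u) = 1"
  by (simp add: cis_cnj cis_mult)

lemma unit2_cs: "unit2 (complex_of_real (cos t) * cis u) (complex_of_real (sin t) * cis v)"
proof -
  have "complex_of_real (cos t) * cis u * cnj (complex_of_real (cos t) * cis u) +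
        complex_of_real (sin t) * cis v * cnj (complex_of_real (sin t) * cis v)
      = complex_of_real (cos t) * complex_of_real (cos t) * (cis u * cnj (cis u)) +
        complex_of_real (sin t) * complex_of_real (sin t) * (cis v * cnj (cis v))"
    by (simp add: ac_simps)
  also have "\<dots> = 1" by (simp only: cis_cnj1 mult_1_right cs1)
  finally show ?thesis by (simp add: unit2_def)
qed

lemma unit2_pf: "unit2 (pf x i 0) (pf x i 1)"
  using unit2_cs[of "x (2*i)" 0 "x (2*i+1)"] by (simp add: pf_def)

lemma G_cong: "(\<forall>j < 2*n + 7*length ps. x j = y j) \<Longrightarrow> G n ps x = G n ps y"
proof (induction ps)
  case Nil
  have "\<And>i. i < n \<Longrightarrow> pf x i = pf y i"
  proof -
    fix i assume "i < n"
    then have "x (2*i) = y (2*i)" "x (2*i+1) = y (2*i+1)" using Nil by auto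
    then show "pf x i = pf y i" by (simp add: pf_def fun_eq_iff)
  qed
  then show ?case by (auto simp: Pst_def fun_eq_iff intro!: prod.cong)
next
  case (Cons p ps)
  obtain a b where p: "p = (a,b)" by fastforce
  have "G n ps x = G n ps y" using Cons by simp
  moreover have kk: "\<And>k. k \<le> 6 \<Longrightarrow> x (2*n+7*length ps + k) = y (2*n+7*length ps + k)"
    using Cons.prems by auto
  ultimately show ?case unfolding p
    using kk[of 0] kk[of 1] kk[of 2] kk[of 3] kk[of 4] kk[of 5] kk[of 6]
    by (simp add: numeral_eq_Suc)
qed

lemma qbit_le1': "qbit r q \<le> 1" by (rule qbit_le1)

lemma ap1_cong: "(\<forall>i\<le>1. \<forall>j\<le>1. A i j = B i j) \<Longrightarrow> ap1 q A w = ap1 q B w"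
  using qbit_le1 by (auto simp: ap1_def fun_eq_iff)

lemma absorb:
  assumes "urow U"
  shows "\<exists>\<mu> t u v. cmod \<mu> = 1 \<and> \<bar>t\<bar> \<le> pi \<and> \<bar>u\<bar> \<le> pi \<and> \<bar>v\<bar> \<le> pi \<and>
     (\<forall>w. ap1 q U (ap1 q (su t0 u0 v0) w) = (\<lambda>r. \<mu> * ap1 q (su t u v) w r))"
proof -
  obtain \<mu> a1 b1 where d: "cmod \<mu> = 1" "unit2 a1 b1" "\<forall>i\<le>1. \<forall>j\<le>1. U i j = \<mu> * sa a1 b1 i j"
    using urow_decomp[OF assms] by blast
  define \<alpha> where "\<alpha> = complex_of_real (cos t0) * cis u0"
  define \<beta> where "\<beta> = complex_of_real (sin t0) * cis v0"
  have u: "unit2 \<alpha> \<beta>" unfolding \<alpha>_def \<beta>_def by (rule unit2_cs)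
  have "unit2 (a1 * \<alpha> - b1 * cnj \<beta>) (a1 * \<beta> + b1 * cnj \<alpha>)" using unit2_mult[OF d(2) u] .
  then obtain t u v where h: "\<bar>t\<bar> \<le> pi" "\<bar>u\<bar> \<le> pi" "\<bar>v\<bar> \<le> pi"
    "a1 * \<alpha> - b1 * cnj \<beta> = complex_of_real (cos t) * cis u" "a1 * \<beta> + b1 * cnj \<alpha> = complex_of_real (sin t) * cis v"
    using unit2_angles by blast
  have "\<forall>w. ap1 q U (ap1 q (su t0 u0 v0) w) = (\<lambda>r. \<mu> * ap1 q (su t u v) w r)"
  proof
    fix w
    have "ap1 q U (ap1 q (su t0 u0 v0) w) = ap1 q (mm U (sa \<alpha> \<beta>)) w"
      by (simp add: ap1_ap1 su_def \<alpha>_def \<beta>_def)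
    also have "\<dots> = ap1 q (\<lambda>i j. \<mu> * su t u v i j) w"
      by (rule ap1_cong) (use mm_sa[OF d(3)] h(4,5) in \<open>simp add: su_def\<close>)
    also have "\<dots> = (\<lambda>r. \<mu> * ap1 q (su t u v) w r)" by (rule ap1_smult_mat)
    finally show "ap1 q U (ap1 q (su t0 u0 v0) w) = (\<lambda>r. \<mu> * ap1 q (su t u v) w r)" .
  qed
  then show ?thesis using d(1) h(1-3) by blast
qed



lemma Pst_split:
  assumes "q < n"
  shows "Pst n x r = pf x q (qbit r q) * (\<Prod>i\<in>{..<n}-{q}. pf x i (qbit r i))"
  unfolding Pst_def using assms by (subst prod.remove[of _ q]) auto

lemma R1_base:
  assumes "q < n" "urow U"
  shows "\<exists>c x'. cmod c = 1 \<and> (box x \<longrightarrow> box x') \<and> ap1 q U (Pst n x) = (\<lambda>r. c * Pst n x' r)"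
proof -
  obtain \<mu> a1 b1 where d: "cmod \<mu> = 1" "unit2 a1 b1" "\<forall>i\<le>1. \<forall>j\<le>1. U i j = \<mu> * sa a1 b1 i j"
    using urow_decomp[OF assms(2)] by blast
  define y where "y k = U k 0 * pf x q 0 + U k 1 * pf x q 1" for k
  have "unit2 (y 0) (y 1)" unfolding y_def by (rule unit2_apply[OF d(3) d(1) d(2) unit2_pf])
  then obtain c t v where h: "cmod c = 1" "\<bar>t\<bar> \<le> pi" "\<bar>v\<bar> \<le> pi"
     "y 0 = c * complex_of_real (cos t)" "y 1 = c * (complex_of_real (sin t) * cis v)"
    using unit2_prod by blast
  define x' where "x' = x(2*q := t, 2*q+1 := v)"
  have pfo: "i \<noteq> q \<Longrightarrow> pf x' i = pf x i" for i by (auto simp: pf_def x'_def fun_eq_iff)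
  have pfq: "k \<le> 1 \<Longrightarrow> y k = c * pf x' q k" for k
  proof -
    assume "k \<le> 1" then have "k = 0 \<or> k = 1" by auto
    then show ?thesis using h(4,5) by (elim disjE) (auto simp: pf_def x'_def)
  qed
  have R: "(\<Prod>i\<in>{..<n}-{q}. pf x i (qbit (f r) i)) = (\<Prod>i\<in>{..<n}-{q}. pf x i (qbit r i))"
    if "\<And>i. i \<noteq> q \<Longrightarrow> qbit (f r) i = qbit r i" for f r
    using that by (intro prod.cong) auto
  have "ap1 q U (Pst n x) = (\<lambda>r. c * Pst n x' r)"
  proof
    fix r
    let ?R = "\<Prod>i\<in>{..<n}-{q}. pf x i (qbit r i)"
    have "ap1 q U (Pst n x) r = U (qbit r q) 0 * (pf x q 0 * ?R) + U (qbit r q) 1 * (pf x q 1 * ?R)"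
      unfolding ap1_def Pst_split[OF assms(1)]
      using R[of "unset_bit q" r] R[of "set_bit q" r] by (simp add: qbit_set qbit_unset)
    also have "\<dots> = y (qbit r q) * ?R" by (simp add: y_def algebra_simps)
    also have "\<dots> = c * pf x' q (qbit r q) * ?R" using pfq[OF qbit_le1] by simp
    also have "\<dots> = c * Pst n x' r"
    proof -
      have "?R = (\<Prod>i\<in>{..<n}-{q}. pf x' i (qbit r i))" using pfo by (intro prod.cong) auto
      then show ?thesis by (simp only: Pst_split[OF assms(1)] mult.assoc)
    qed
    finally show "ap1 q U (Pst n x) r = c * Pst n x' r" .
  qed
  moreover have "box x \<longrightarrow> box x'" using h(2,3) by (auto simp: box_def x'_def)
  ultimately show ?thesis using h(1) by blast
qed

lemma unset_self: "qbit r q = 0 \<Longrightarrow> unset_bit q r = r"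
  by (rule bit_eqI) (auto simp: bit_unset_bit_iff qbit_bit split: if_splits)
lemma set_self: "qbit r q = 1 \<Longrightarrow> set_bit q r = r"
  by (rule bit_eqI) (auto simp: bit_set_bit_iff qbit_bit split: if_splits)

lemma ap1_id: "ap1 q (su 0 0 0) w = w"
proof
  fix r
  show "ap1 q (su 0 0 0) w r = w r"
  proof (cases "qbit r q = 0")
    case True then show ?thesis by (simp add: ap1_def su_def sa_def unset_self)
  next
    case False then have "qbit r q = 1" using qbit_le1[of r q] by linarith
    then show ?thesis by (simp add: ap1_def su_def sa_def set_self)
  qed
qed

lemma R1:
  assumes "valid n ps" "q < n" "urow U" "box x"
  shows "\<exists>c x'. cmod c = 1 \<and> box x' \<and> ap1 q U (G n ps x) = (\<lambda>r. c * G n ps x' r)"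
  using assms(1,4)
proof (induction ps arbitrary: x)
  case Nil
  then show ?case using R1_base[OF assms(2,3), of x] by auto
next
  case (Cons p ps)
  obtain a b where p: "p = (a,b)" by fastforce
  have ab: "a < n" "b < n" "a \<noteq> b" and vps: "valid n ps" using Cons.prems(1) by (auto simp: valid_def p)
  define ofs where "ofs = 2*n + 7*length ps"
  define SA where "SA = su (x (ofs+1)) (x (ofs+2)) (x (ofs+3))"
  define SB where "SB = su (x (ofs+4)) (x (ofs+5)) (x (ofs+6))"
  define M where "M = apMS a b (complex_of_real (cos (x ofs))) (complex_of_real (sin (x ofs)))"
  have Gx: "G n ((a,b)#ps) x = ap1 a SA (ap1 b SB (M (G n ps x)))"
    by (simp add: SA_def SB_def M_def ofs_def)
  have Gx': "G n ((a,b)#ps) x' = ap1 a (su (x' (ofs+1)) (x' (ofs+2)) (x' (ofs+3))) (ap1 b (su (x' (ofs+4)) (x' (ofs+5)) (x' (ofs+6)))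
      (apMS a b (complex_of_real (cos (x' ofs))) (complex_of_real (sin (x' ofs))) (G n ps x')))" for x'
    by (simp add: ofs_def)
  show ?case
  proof (cases "q = a")
    case True
    obtain \<mu> t u v where h: "cmod \<mu> = 1" "\<bar>t\<bar> \<le> pi" "\<bar>u\<bar> \<le> pi" "\<bar>v\<bar> \<le> pi"
      "\<forall>w. ap1 q U (ap1 q SA w) = (\<lambda>r. \<mu> * ap1 q (su t u v) w r)"
      using absorb[OF assms(3), of q "x (ofs+1)" "x (ofs+2)" "x (ofs+3)"] unfolding SA_def by blast
    define x' where "x' = x(ofs+1 := t, ofs+2 := u, ofs+3 := v)"
    have "G n ps x' = G n ps x" by (rule G_cong) (auto simp: x'_def ofs_def)
    then have gx': "G n ((a,b)#ps) x' = ap1 a (su t u v) (ap1 b SB (M (G n ps x)))"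
      unfolding Gx' by (simp add: x'_def SB_def M_def)
    have "ap1 q U (G n (p#ps) x) = ap1 a U (ap1 a SA (ap1 b SB (M (G n ps x))))"
      by (simp only: p Gx True)
    also have "\<dots> = (\<lambda>r. \<mu> * G n (p#ps) x' r)"
      using h(5) True by (simp only: p gx')
    finally have "ap1 q U (G n (p#ps) x) = (\<lambda>r. \<mu> * G n (p#ps) x' r)" .
    moreover have "box x'" using Cons.prems(2) h by (auto simp: box_def x'_def)
    ultimately show ?thesis using h(1) by blast
  next
    case False
    show ?thesis
    proof (cases "q = b")
      case True
      obtain \<mu> t u v where h: "cmod \<mu> = 1" "\<bar>t\<bar> \<le> pi" "\<bar>u\<bar> \<le> pi" "\<bar>v\<bar> \<le> pi"
        "\<forall>w. ap1 q U (ap1 q SB w) = (\<lambda>r. \<mu> * ap1 q (su t u v) w r)"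
        using absorb[OF assms(3), of q "x (ofs+4)" "x (ofs+5)" "x (ofs+6)"] unfolding SB_def by blast
      define x' where "x' = x(ofs+4 := t, ofs+5 := u, ofs+6 := v)"
      have "G n ps x' = G n ps x" by (rule G_cong) (auto simp: x'_def ofs_def)
      then have gx': "G n ((a,b)#ps) x' = ap1 a SA (ap1 b (su t u v) (M (G n ps x)))"
        unfolding Gx' by (simp add: x'_def SA_def M_def)
      have "ap1 q U (G n (p#ps) x) = ap1 a SA (ap1 q U (ap1 b SB (M (G n ps x))))"
        unfolding p Gx True by (rule ap1_comm) (use ab in auto)
      also have "\<dots> = ap1 a SA (\<lambda>r. \<mu> * ap1 b (su t u v) (M (G n ps x)) r)"
        using h(5) True by simp
      also have "\<dots> = (\<lambda>r. \<mu> * G n (p#ps) x' r)"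
        by (simp only: p gx' ap1_smult_vec)
      finally have "ap1 q U (G n (p#ps) x) = (\<lambda>r. \<mu> * G n (p#ps) x' r)" .
      moreover have "box x'" using Cons.prems(2) h by (auto simp: box_def x'_def)
      ultimately show ?thesis using h(1) by blast
    next
      case False2: False
      obtain c x'' where h: "cmod c = 1" "box x''" "ap1 q U (G n ps x) = (\<lambda>r. c * G n ps x'' r)"
        using Cons.IH[OF vps Cons.prems(2)] by blast
      define x' where "x' j = (if j < ofs then x'' j else x j)" for j
      have "G n ps x' = G n ps x''" by (rule G_cong) (auto simp: x'_def ofs_def)
      then have gx': "G n ((a,b)#ps) x' = ap1 a SA (ap1 b SB (M (G n ps x'')))"
        unfolding Gx' by (simp add: x'_def SA_def SB_def M_def)
      have "ap1 q U (G n (p#ps) x) = ap1 a SA (ap1 b SB (M (ap1 q U (G n ps x))))"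
      proof -
        have e1: "ap1 q U (ap1 a SA w) = ap1 a SA (ap1 q U w)" for w
          by (rule ap1_comm) (use False in auto)
        have e2: "ap1 q U (ap1 b SB w) = ap1 b SB (ap1 q U w)" for w
          by (rule ap1_comm) (use False2 in auto)
        have e3: "ap1 q U (apMS a b co si w) = apMS a b co si (ap1 q U w)" for co si w
          by (rule ap1_MS_comm) (use False False2 in auto)
        show ?thesis by (simp only: p Gx M_def e1 e2 e3)
      qed
      also have "\<dots> = (\<lambda>r. c * G n (p#ps) x' r)"
        using h(3) by (simp only: p gx' M_def apMS_smult_vec ap1_smult_vec)
      finally have "ap1 q U (G n (p#ps) x) = (\<lambda>r. c * G n (p#ps) x' r)" .
      moreover have "box x'" using Cons.prems(2) h(2) by (auto simp: box_def x'_def)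
      ultimately show ?thesis using h(1) by blast
    qed
  qed
qed

lemma R2:
  assumes "box x"
  shows "\<exists>x'. box x' \<and> apMS a b (complex_of_real (cos (t/2))) (complex_of_real (sin (t/2))) (\<lambda>r. c * G n ps x r)
           = (\<lambda>r. c * G n ((a,b)#ps) x' r)"
proof -
  define ofs where "ofs = 2*n + 7*length ps"
  define x' where "x' = x(ofs := Arg (cis (t/2)), ofs+1 := 0, ofs+2 := 0, ofs+3 := 0, ofs+4 := 0, ofs+5 := 0, ofs+6 := 0)"
  have "G n ps x' = G n ps x" by (rule G_cong) (auto simp: x'_def ofs_def)
  then have "G n ((a,b)#ps) x' = apMS a b (complex_of_real (cos (t/2))) (complex_of_real (sin (t/2))) (G n ps x)"
    by (simp add: x'_def ofs_def[symmetric] ap1_id cos_Arg_cis sin_Arg_cis)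
  moreover have "box x'" using assms Arg_cis_bound[of "t/2"] by (auto simp: box_def x'_def)
  ultimately show ?thesis by (auto simp: apMS_smult_vec)
qed



lemma onq_carrier: "on_qubit n q U \<in> carrier_mat (2^n) (2^n)"
  by (simp add: on_qubit_def)
lemma ms_carrier: "ms_gate n a b t \<in> carrier_mat (2^n) (2^n)"
  by (simp add: ms_gate_def)
lemma circ_carrier: "circ n gs xs \<in> carrier_mat (2^n) (2^n)"
  by (induction n gs xs rule: circ.induct) (auto simp: onq_carrier ms_carrier)

lemma vec_ap1:
  assumes "q < n"
  shows "vec (2^n) (ap1 q A (\<lambda>r. vec (2^n) f $ r)) = vec (2^n) (ap1 q A f)"
  by (rule eq_vecI) (auto simp: ap1_def assms set_bit_lt unset_bit_lt)

lemma vec_apMS: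
  assumes "a < n" "b < n"
  shows "vec (2^n) (apMS a b co si (\<lambda>r. vec (2^n) f $ r)) = vec (2^n) (apMS a b co si f)"
  by (rule eq_vecI) (auto simp: apMS_def assms flip2_def flip_bit_lt)

lemma cs1': "complex_of_real (cos t) * cnj (complex_of_real (cos t)) + complex_of_real (sin t) * cnj (complex_of_real (sin t)) = 1"
  using cs1 by simp

lemma urow_rot2: "urow (\<lambda>i j. rot2 P t $$ (i,j))"
proof (cases P)
  case PX
  have "complex_of_real (cos (t/2)) * cnj (complex_of_real (cos (t/2))) + (- \<i> * complex_of_real (sin (t/2))) * cnj (- \<i> * complex_of_real (sin (t/2))) = 1"
    using cs1[of "t/2"] by (simp add: algebra_simps)
  moreover have "complex_of_real (cos (t/2)) * cnj (- \<i> * complex_of_real (sin (t/2))) + (- \<i> * complex_of_real (sin (t/2))) * cnj (complex_of_real (cos (t/2))) = 0"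
    by (simp add: algebra_simps)
  ultimately show ?thesis using PX by (simp add: urow_def rot2_def algebra_simps)
next
  case PY
  have "complex_of_real (cos (t/2)) * cnj (complex_of_real (cos (t/2))) + (- complex_of_real (sin (t/2))) * cnj (- complex_of_real (sin (t/2))) = 1"
    using cs1[of "t/2"] by simp
  moreover have "complex_of_real (sin (t/2)) * cnj (complex_of_real (sin (t/2))) + complex_of_real (cos (t/2)) * cnj (complex_of_real (cos (t/2))) = 1"
    using cs1[of "t/2"] by (simp add: add.commute)
  ultimately show ?thesis using PY by (simp add: urow_def rot2_def algebra_simps)
next
  case PZ
  then show ?thesis by (simp add: urow_def rot2_def cis_cnj1)
qed

lemma urow_unitary2:
  assumes "unitary2 U"
  shows "urow (\<lambda>i j. U $$ (i,j))"
proof -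
  have U: "U \<in> carrier_mat 2 2" and e: "U * adj2 U = 1\<^sub>m 2" using assms by (auto simp: unitary2_def)
  have ent: "(U * adj2 U) $$ (i,k) = U $$ (i,0) * cnj (U $$ (k,0)) + U $$ (i,1) * cnj (U $$ (k,1))"
    if "i < 2" "k < 2" for i k
    using U that by (simp add: adj2_def scalar_prod_def numeral_2_eq_2)
  have "U $$ (0,0) * cnj (U $$ (0,0)) + U $$ (0,1) * cnj (U $$ (0,1)) = 1"
    using ent[of 0 0] e by simp
  moreover have "U $$ (1,0) * cnj (U $$ (1,0)) + U $$ (1,1) * cnj (U $$ (1,1)) = 1"
    using ent[of 1 1] e by simp
  moreover have "U $$ (0,0) * cnj (U $$ (1,0)) + U $$ (0,1) * cnj (U $$ (1,1)) = 0"
    using ent[of 0 1] e by simp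
  ultimately show ?thesis by (simp add: urow_def)
qed

definition reach :: "nat \<Rightarrow> (nat \<times> nat) list \<Rightarrow> complex vec \<Rightarrow> bool" where
  "reach n ps v \<longleftrightarrow> (\<exists>c x. cmod c = 1 \<and> box x \<and> v = vec (2^n) (\<lambda>r. c * G n ps x r))"

lemma reach_dim: "reach n ps v \<Longrightarrow> v \<in> carrier_vec (2^n)"
  by (auto simp: reach_def)

lemma step1:
  assumes "valid n ps" "q < n" "urow (\<lambda>i j. U $$ (i,j))" "reach n ps v"
  shows "reach n ps (on_qubit n q U *\<^sub>v v)"
proof -
  obtain c x where h: "cmod c = 1" "box x" "v = vec (2^n) (\<lambda>r. c * G n ps x r)"
    using assms(4) by (auto simp: reach_def)
  obtain c1 x1 where h1: "cmod c1 = 1" "box x1" "ap1 q (\<lambda>i j. U $$ (i,j)) (G n ps x) = (\<lambda>r. c1 * G n ps x1 r)"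
    using R1[OF assms(1,2,3) h(2)] by blast
  have "on_qubit n q U *\<^sub>v v = vec (2^n) (ap1 q (\<lambda>i j. U $$ (i,j)) (\<lambda>r. c * G n ps x r))"
    using matvec1[OF assms(2), of v U] vec_ap1[OF assms(2)] h(3) by simp
  also have "\<dots> = vec (2^n) (\<lambda>r. (c * c1) * G n ps x1 r)"
    by (simp add: ap1_smult_vec h1(3) mult.assoc)
  finally have "on_qubit n q U *\<^sub>v v = vec (2^n) (\<lambda>r. (c * c1) * G n ps x1 r)" .
  then show ?thesis using h(1) h1(1,2) unfolding reach_def
    by (intro exI[of _ "c*c1"] exI[of _ x1]) (simp add: norm_mult)
qed

lemma stepMS:
  assumes "a < n" "b < n" "a \<noteq> b" "reach n ps v"
  shows "reach n ((a,b)#ps) (ms_gate n a b t *\<^sub>v v)"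
proof -
  obtain c x where h: "cmod c = 1" "box x" "v = vec (2^n) (\<lambda>r. c * G n ps x r)"
    using assms(4) by (auto simp: reach_def)
  obtain x1 where h1: "box x1" "apMS a b (complex_of_real (cos (t/2))) (complex_of_real (sin (t/2))) (\<lambda>r. c * G n ps x r)
           = (\<lambda>r. c * G n ((a,b)#ps) x1 r)"
    using R2[OF h(2)] by blast
  have "ms_gate n a b t *\<^sub>v v = vec (2^n) (apMS a b (complex_of_real (cos (t/2))) (complex_of_real (sin (t/2))) (\<lambda>r. c * G n ps x r))"
    using matvecMS[OF assms(1,2,3), of v t] vec_apMS[OF assms(1,2)] h(3) by simp
  also have "\<dots> = vec (2^n) (\<lambda>r. c * G n ((a,b)#ps) x1 r)" by (simp add: h1(2))
  finally show ?thesis using h h1 by (auto simp: reach_def)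
qed

fun msp :: "gate list \<Rightarrow> (nat \<times> nat) list" where
  "msp [] = []"
| "msp (MS a b # gs) = msp gs @ [(a,b)]"
| "msp (Rot P q # gs) = msp gs"
| "msp (Fixed U q # gs) = msp gs"

lemma circ_reach:
  assumes "\<forall>g\<in>set gs. wf_gate n g" "valid n ps" "reach n ps v"
  shows "valid n (msp gs @ ps) \<and> length (msp gs) = num_ms gs \<and> reach n (msp gs @ ps) (circ n gs xs *\<^sub>v v)"
  using assms
proof (induction gs arbitrary: ps v xs)
  case Nil
  then show ?case using reach_dim[OF Nil(3)] by (auto simp: num_ms_def)
next
  case (Cons g gs)
  have wf: "wf_gate n g" and wfs: "\<forall>g\<in>set gs. wf_gate n g" using Cons.prems(1) by auto
  have vd: "v \<in> carrier_vec (2^n)" by (rule reach_dim[OF Cons.prems(3)])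
  show ?case
  proof (cases g)
    case (Rot P q)
    have q: "q < n" using wf Rot by (simp add: wf_gate_def)
    have r: "reach n ps (on_qubit n q (rot2 P (hd xs)) *\<^sub>v v)"
      by (rule step1[OF Cons.prems(2) q urow_rot2 Cons.prems(3)])
    have "valid n (msp gs @ ps) \<and> length (msp gs) = num_ms gs \<and>
       reach n (msp gs @ ps) (circ n gs (tl xs) *\<^sub>v (on_qubit n q (rot2 P (hd xs)) *\<^sub>v v))"
      using Cons.IH[OF wfs Cons.prems(2) r] by blast
    moreover have "circ n (g#gs) xs *\<^sub>v v = circ n gs (tl xs) *\<^sub>v (on_qubit n q (rot2 P (hd xs)) *\<^sub>v v)"
      using Rot vd by (simp add: circ_carrier[THEN assoc_mult_mat_vec, OF onq_carrier])
    ultimately show ?thesis using Rot by (auto simp: num_ms_def)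
  next
    case (Fixed U q)
    have q: "q < n" and u: "unitary2 U" using wf Fixed by (auto simp: wf_gate_def)
    have r: "reach n ps (on_qubit n q U *\<^sub>v v)"
      by (rule step1[OF Cons.prems(2) q urow_unitary2[OF u] Cons.prems(3)])
    have "valid n (msp gs @ ps) \<and> length (msp gs) = num_ms gs \<and>
       reach n (msp gs @ ps) (circ n gs xs *\<^sub>v (on_qubit n q U *\<^sub>v v))"
      using Cons.IH[OF wfs Cons.prems(2) r] by blast
    moreover have "circ n (g#gs) xs *\<^sub>v v = circ n gs xs *\<^sub>v (on_qubit n q U *\<^sub>v v)"
      using Fixed vd by (simp add: circ_carrier[THEN assoc_mult_mat_vec, OF onq_carrier])
    ultimately show ?thesis using Fixed by (auto simp: num_ms_def)
  next
    case (MS a b)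
    have ab: "a < n" "b < n" "a \<noteq> b" using wf MS by (auto simp: wf_gate_def)
    have r: "reach n ((a,b)#ps) (ms_gate n a b (hd xs) *\<^sub>v v)"
      by (rule stepMS[OF ab Cons.prems(3)])
    have vps: "valid n ((a,b)#ps)" using Cons.prems(2) ab by (auto simp: valid_def)
    have "valid n (msp gs @ ((a,b)#ps)) \<and> length (msp gs) = num_ms gs \<and>
       reach n (msp gs @ ((a,b)#ps)) (circ n gs (tl xs) *\<^sub>v (ms_gate n a b (hd xs) *\<^sub>v v))"
      using Cons.IH[OF wfs vps r] by blast
    moreover have "circ n (g#gs) xs *\<^sub>v v = circ n gs (tl xs) *\<^sub>v (ms_gate n a b (hd xs) *\<^sub>v v)"
      using MS vd by (simp add: circ_carrier[THEN assoc_mult_mat_vec, OF ms_carrier])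
    ultimately show ?thesis using MS by (auto simp: num_ms_def)
  qed
qed

lemma reach_init: "reach n [] (unit_vec (2^n) 0)"
proof -
  have "unit_vec (2^n) 0 = vec (2^n) (\<lambda>r. 1 * G n [] (\<lambda>_. 0) r)"
  proof (rule eq_vecI)
    fix r assume "r < dim_vec (vec (2^n) (\<lambda>r. 1 * G n [] (\<lambda>_. 0) r))"
    then have r: "r < 2^n" by simp
    have pf0: "pf (\<lambda>_. 0) i k = (if k = 0 then 1 else 0)" for i k by (simp add: pf_def)
    have "G n [] (\<lambda>_. 0) r = (if r = 0 then 1 else 0)"
    proof (cases "r = 0")
      case True
      then show ?thesis by (simp add: Pst_def pf0 qbit_def)
    next
      case False
      have "\<exists>i<n. qbit r i \<noteq> 0"
      proof (rule ccontr)
        assume "\<not> (\<exists>i<n. qbit r i \<noteq> 0)"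
        then have h0: "\<And>i. i < n \<Longrightarrow> qbit r i = 0" by auto
        have "\<forall>i. qbit r i = qbit 0 i"
        proof
          fix i show "qbit r i = qbit 0 i"
          proof (cases "i < n")
            case True then show ?thesis using h0 by (simp add: qbit_def)
          next
            case False then have "\<not> bit r i" using r lt_pow_iff by auto
            then show ?thesis by (simp add: qbit_bit qbit_def)
          qed
        qed
        then show False using False by (simp add: qbit_eq_iff)
      qed
      then obtain i where "i < n" "qbit r i \<noteq> 0" by blast
      then have "(\<Prod>i<n. pf (\<lambda>_. 0) i (qbit r i)) = 0"
        by (intro prod_zero) (auto simp: pf0)
      then show ?thesis using False by (simp add: Pst_def)
    qed
    then show "unit_vec (2^n) 0 $ r = vec (2^n) (\<lambda>r. 1 * G n [] (\<lambda>_. 0) r) $ r"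
      using r by simp
  qed simp
  then show ?thesis by (auto simp: reach_def box_def intro!: exI[of _ 1] exI[of _ "\<lambda>_. 0"])
qed



definition LBU :: "nat \<Rightarrow> ((nat \<Rightarrow> real) \<Rightarrow> 'r \<Rightarrow> complex) \<Rightarrow> bool" where
  "LBU K F \<longleftrightarrow> (\<exists>B L. \<forall>x r. cmod (F x r) \<le> B \<and>
      (\<forall>y e. 0 \<le> e \<and> (\<forall>j<K. \<bar>x j - y j\<bar> \<le> e) \<longrightarrow> cmod (F x r - F y r) \<le> L * e))"

lemma LBU_I:
  assumes "\<And>x r. cmod (F x r) \<le> B"
    and "\<And>x y e r. 0 \<le> e \<Longrightarrow> (\<forall>j<K. \<bar>x j - y j\<bar> \<le> e) \<Longrightarrow> cmod (F x r - F y r) \<le> L * e"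
  shows "LBU K F"
  unfolding LBU_def using assms by blast

lemma LBU_E:
  assumes "LBU K F"
  obtains B L where "0 \<le> B" "0 \<le> L" "\<And>x r. cmod (F x r) \<le> B"
    "\<And>x y e r. 0 \<le> e \<Longrightarrow> (\<forall>j<K. \<bar>x j - y j\<bar> \<le> e) \<Longrightarrow> cmod (F x r - F y r) \<le> L * e"
proof -
  obtain B L where h: "\<forall>x r. cmod (F x r) \<le> B \<and>
      (\<forall>y e. 0 \<le> e \<and> (\<forall>j<K. \<bar>x j - y j\<bar> \<le> e) \<longrightarrow> cmod (F x r - F y r) \<le> L * e)"
    using assms by (auto simp: LBU_def)
  have b1: "cmod (F x r) \<le> max B 0" for x r using h by (meson max.coboundedI1)
  have b2: "cmod (F x r - F y r) \<le> max L 0 * e"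
      if "0 \<le> e" "\<forall>j<K. \<bar>x j - y j\<bar> \<le> e" for x y e r
  proof -
    have "cmod (F x r - F y r) \<le> L * e" using h that by blast
    also have "\<dots> \<le> max L 0 * e" using that(1) by (intro mult_right_mono) auto
    finally show ?thesis .
  qed
  have "0 \<le> max B 0" "0 \<le> max L 0" by auto
  then show ?thesis using that b1 b2 by blast
qed

lemma LBU_uminus: "LBU K F \<Longrightarrow> LBU K (\<lambda>x r. - F x r)"
  unfolding LBU_def by (metis norm_minus_cancel minus_diff_minus)

lemma LBU_const: "LBU K (\<lambda>x r. c)"
  by (rule LBU_I[where B="cmod c" and L=0]) auto

lemma LBU_add:
  assumes "LBU K F" "LBU K Q"
  shows "LBU K (\<lambda>x r. F x r + Q x r)"
proof -
  obtain B1 L1 where f: "0 \<le> B1" "0 \<le> L1" "\<And>x r. cmod (F x r) \<le> B1"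
    "\<And>x y e r. 0 \<le> e \<Longrightarrow> (\<forall>j<K. \<bar>x j - y j\<bar> \<le> e) \<Longrightarrow> cmod (F x r - F y r) \<le> L1 * e"
    using LBU_E[OF assms(1)] by blast
  obtain B2 L2 where g: "0 \<le> B2" "0 \<le> L2" "\<And>x r. cmod (Q x r) \<le> B2"
    "\<And>x y e r. 0 \<le> e \<Longrightarrow> (\<forall>j<K. \<bar>x j - y j\<bar> \<le> e) \<Longrightarrow> cmod (Q x r - Q y r) \<le> L2 * e"
    using LBU_E[OF assms(2)] by blast
  show ?thesis
  proof (rule LBU_I[where B="B1 + B2" and L="L1 + L2"])
    show "cmod (F x r + Q x r) \<le> B1 + B2" for x r
      using norm_triangle_ineq[of "F x r" "Q x r"] f(3)[of x r] g(3)[of x r] by linarith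
    show "cmod (F x r + Q x r - (F y r + Q y r)) \<le> (L1 + L2) * e"
      if "0 \<le> e" "\<forall>j<K. \<bar>x j - y j\<bar> \<le> e" for x y e r
    proof -
      have "cmod (F x r + Q x r - (F y r + Q y r)) \<le> cmod (F x r - F y r) + cmod (Q x r - Q y r)"
        using norm_triangle_ineq[of "F x r - F y r" "Q x r - Q y r"] by (simp add: algebra_simps)
      also have "\<dots> \<le> L1 * e + L2 * e" using f(4)[OF that, of r] g(4)[OF that, of r] by linarith
      finally show ?thesis by (simp add: algebra_simps)
    qed
  qed
qed

lemma LBU_mult:
  assumes "LBU K F" "LBU K Q"
  shows "LBU K (\<lambda>x r. F x r * Q x r)"
proof -
  obtain B1 L1 where f: "0 \<le> B1" "0 \<le> L1" "\<And>x r. cmod (F x r) \<le> B1"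
    "\<And>x y e r. 0 \<le> e \<Longrightarrow> (\<forall>j<K. \<bar>x j - y j\<bar> \<le> e) \<Longrightarrow> cmod (F x r - F y r) \<le> L1 * e"
    using LBU_E[OF assms(1)] by blast
  obtain B2 L2 where g: "0 \<le> B2" "0 \<le> L2" "\<And>x r. cmod (Q x r) \<le> B2"
    "\<And>x y e r. 0 \<le> e \<Longrightarrow> (\<forall>j<K. \<bar>x j - y j\<bar> \<le> e) \<Longrightarrow> cmod (Q x r - Q y r) \<le> L2 * e"
    using LBU_E[OF assms(2)] by blast
  show ?thesis
  proof (rule LBU_I[where B="B1 * B2" and L="B1 * L2 + B2 * L1"])
    show "cmod (F x r * Q x r) \<le> B1 * B2" for x r
      unfolding norm_mult by (intro mult_mono f(3) g(3)) (auto simp: f(1))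
    show "cmod (F x r * Q x r - F y r * Q y r) \<le> (B1 * L2 + B2 * L1) * e"
      if "0 \<le> e" "\<forall>j<K. \<bar>x j - y j\<bar> \<le> e" for x y e r
    proof -
      have "F x r * Q x r - F y r * Q y r = F x r * (Q x r - Q y r) + Q y r * (F x r - F y r)"
        by (simp add: algebra_simps)
      then have "cmod (F x r * Q x r - F y r * Q y r) \<le> cmod (F x r) * cmod (Q x r - Q y r) + cmod (Q y r) * cmod (F x r - F y r)"
        by (metis norm_mult norm_triangle_ineq)
      also have "\<dots> \<le> B1 * (L2 * e) + B2 * (L1 * e)"
        by (intro add_mono mult_mono f(3) g(3) f(4)[OF that] g(4)[OF that]) (auto simp: f(1) g(1))
      finally show ?thesis by (simp add: algebra_simps)
    qed
  qed
qed

lemma LBU_cnj: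
  assumes "LBU K F"
  shows "LBU K (\<lambda>x r. cnj (F x r))"
  using assms unfolding LBU_def
  by (metis complex_cnj_diff complex_mod_cnj)

lemma LBU_comp_r:
  assumes "LBU K F"
  shows "LBU K (\<lambda>x r. F x (\<sigma> r))"
  using assms unfolding LBU_def by blast

lemma LBU_if:
  assumes "LBU K F" "LBU K Q"
  shows "LBU K (\<lambda>x r. if P r then F x r else Q x r)"
proof -
  obtain B1 L1 where f: "0 \<le> B1" "0 \<le> L1" "\<And>x r. cmod (F x r) \<le> B1"
    "\<And>x y e r. 0 \<le> e \<Longrightarrow> (\<forall>j<K. \<bar>x j - y j\<bar> \<le> e) \<Longrightarrow> cmod (F x r - F y r) \<le> L1 * e"
    using LBU_E[OF assms(1)] by blast
  obtain B2 L2 where g: "0 \<le> B2" "0 \<le> L2" "\<And>x r. cmod (Q x r) \<le> B2"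
    "\<And>x y e r. 0 \<le> e \<Longrightarrow> (\<forall>j<K. \<bar>x j - y j\<bar> \<le> e) \<Longrightarrow> cmod (Q x r - Q y r) \<le> L2 * e"
    using LBU_E[OF assms(2)] by blast
  show ?thesis
  proof (rule LBU_I[where B="B1 + B2" and L="L1 + L2"])
    show "cmod (if P r then F x r else Q x r) \<le> B1 + B2" for x r
      using f(3)[of x r] g(3)[of x r] f(1) g(1) by auto
    show "cmod ((if P r then F x r else Q x r) - (if P r then F y r else Q y r)) \<le> (L1 + L2) * e"
      if "0 \<le> e" "\<forall>j<K. \<bar>x j - y j\<bar> \<le> e" for x y e r
      using f(4)[OF that, of r] g(4)[OF that, of r] f(2) g(2) that(1)
      by (auto simp: distrib_right intro: order_trans[OF _ add_increasing2[OF mult_nonneg_nonneg]]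
                                       order_trans[OF _ add_increasing[OF mult_nonneg_nonneg]])
  qed
qed

lemma abs_cos_diff: "\<bar>cos (a::real) - cos b\<bar> \<le> \<bar>a - b\<bar>"
proof -
  have "\<bar>cos a - cos b\<bar> = 2 * \<bar>sin ((a + b) / 2)\<bar> * \<bar>sin ((b - a) / 2)\<bar>"
    by (simp add: cos_diff_cos abs_mult)
  also have "\<dots> \<le> 2 * 1 * \<bar>(b - a) / 2\<bar>"
    by (intro mult_mono abs_sin_x_le_abs_x) auto
  finally show ?thesis by simp
qed

lemma abs_sin_diff: "\<bar>sin (a::real) - sin b\<bar> \<le> \<bar>a - b\<bar>"
proof -
  have "\<bar>sin a - sin b\<bar> = 2 * \<bar>sin ((a - b) / 2)\<bar> * \<bar>cos ((a + b) / 2)\<bar>"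
    by (simp add: sin_diff_sin abs_mult)
  also have "\<dots> \<le> 2 * \<bar>(a - b) / 2\<bar> * 1"
    by (intro mult_mono abs_sin_x_le_abs_x) auto
  finally show ?thesis by simp
qed

lemma LBU_cos: "j < K \<Longrightarrow> LBU K (\<lambda>x r. complex_of_real (cos (x j)))"
  by (rule LBU_I[where B=1 and L=1]) (auto intro: order_trans[OF abs_cos_diff] simp flip: of_real_diff)

lemma LBU_sin: "j < K \<Longrightarrow> LBU K (\<lambda>x r. complex_of_real (sin (x j)))"
  by (rule LBU_I[where B=1 and L=1]) (auto intro: order_trans[OF abs_sin_diff] simp flip: of_real_diff)

lemma LBU_cis: "j < K \<Longrightarrow> LBU K (\<lambda>x r. cis (x j))"
proof (rule LBU_I[where B=1 and L=2])
  fix x y :: "nat \<Rightarrow> real" and e :: real and r :: 'a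
  assume j: "j < K" and e: "0 \<le> e" "\<forall>j<K. \<bar>x j - y j\<bar> \<le> e"
  have "cmod (cis (x j) - cis (y j)) \<le> \<bar>cos (x j) - cos (y j)\<bar> + \<bar>sin (x j) - sin (y j)\<bar>"
    using cmod_le[of "cis (x j) - cis (y j)"] by simp
  also have "\<dots> \<le> e + e" using abs_cos_diff[of "x j" "y j"] abs_sin_diff[of "x j" "y j"] e j by fastforce
  finally show "cmod (cis (x j) - cis (y j)) \<le> 2 * e" by simp
qed simp

lemma LBU_prod:
  assumes "finite I" "\<And>i. i \<in> I \<Longrightarrow> LBU K (F i)"
  shows "LBU K (\<lambda>x r. \<Prod>i\<in>I. F i x r)"
  using assms
proof (induction I rule: finite_induct)
  case empty then show ?case by (simp add: LBU_const)
next
  case (insert i I)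
  then show ?case by (simp add: LBU_mult)
qed

lemma LBU_mono: "K \<le> K' \<Longrightarrow> LBU K F \<Longrightarrow> LBU K' F"
  unfolding LBU_def by (meson order_less_le_trans)

lemma LBU_shift: "LBU K F \<Longrightarrow> LBU (K + s) (\<lambda>x r. F (\<lambda>j. x (j + s)) r)"
  unfolding LBU_def by (metis add_less_cancel_right)

lemma LBU_su:
  assumes "i1 < K" "i2 < K" "i3 < K"
  shows "LBU K (\<lambda>x r. su (x i1) (x i2) (x i3) (f r) (g r))"
proof -
  have a: "LBU K (\<lambda>x r. complex_of_real (cos (x i1)) * cis (x i2))"
    using assms by (intro LBU_mult LBU_cos LBU_cis)
  have b: "LBU K (\<lambda>x r. complex_of_real (sin (x i1)) * cis (x i3))"
    using assms by (intro LBU_mult LBU_sin LBU_cis)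
  have "LBU K (\<lambda>x r. if f r = 0 then (if g r = 0 then complex_of_real (cos (x i1)) * cis (x i2)
        else complex_of_real (sin (x i1)) * cis (x i3)) else (if g r = 0 then - cnj (complex_of_real (sin (x i1)) * cis (x i3))
        else cnj (complex_of_real (cos (x i1)) * cis (x i2))))"
    using a b by (intro LBU_if LBU_cnj LBU_uminus)
  then show ?thesis by (simp add: su_def sa_def)
qed

lemma LBU_ap1:
  assumes "LBU K (\<lambda>x r. A x (qbit r q) 0)" "LBU K (\<lambda>x r. A x (qbit r q) 1)" "LBU K W"
  shows "LBU K (\<lambda>x r. ap1 q (A x) (W x) r)"
  unfolding ap1_def
  by (intro LBU_add LBU_mult assms LBU_comp_r[OF assms(3)])

lemma LBU_apMS:
  assumes "j < K" "LBU K W"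
  shows "LBU K (\<lambda>x r. apMS a b (complex_of_real (cos (x j))) (complex_of_real (sin (x j))) (W x) r)"
proof -
  have "LBU K (\<lambda>x r. complex_of_real (cos (x j)) * W x r + (- \<i>) * complex_of_real (sin (x j)) * W x (flip2 a b r))"
    using assms by (intro LBU_add LBU_mult LBU_const LBU_cos LBU_sin LBU_comp_r[OF assms(2)])
  then show ?thesis by (simp add: apMS_def)
qed

lemma LBU_G: "LBU (2*n + 7*length ps) (\<lambda>x r. G n ps x r)"
proof (induction ps)
  case Nil
  have "LBU (2*n) (\<lambda>x r. \<Prod>i<n. pf x i (qbit r i))"
  proof (rule LBU_prod)
    fix i assume "i \<in> {..<n}"
    then have i: "2*i < 2*n" "2*i+1 < 2*n" by auto
    have "LBU (2*n) (\<lambda>x r. if qbit r i = 0 then complex_of_real (cos (x (2*i)))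
            else complex_of_real (sin (x (2*i))) * cis (x (2*i+1)))"
      using i by (intro LBU_if LBU_mult LBU_cos LBU_sin LBU_cis)
    then show "LBU (2*n) (\<lambda>x r. pf x i (qbit r i))" by (simp add: pf_def)
  qed simp
  then show ?case by (simp add: Pst_def)
next
  case (Cons p ps)
  obtain a b where p: "p = (a,b)" by fastforce
  let ?K = "2*n + 7*length (p#ps)"
  let ?o = "2*n + 7*length ps"
  have IH: "LBU ?K (\<lambda>x r. G n ps x r)" by (rule LBU_mono[OF _ Cons.IH]) simp
  have M: "LBU ?K (\<lambda>x r. apMS a b (complex_of_real (cos (x ?o))) (complex_of_real (sin (x ?o))) (G n ps x) r)"
    by (rule LBU_apMS[OF _ IH]) simp
  have B: "LBU ?K (\<lambda>x r. ap1 b (su (x (?o+4)) (x (?o+5)) (x (?o+6)))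
            (apMS a b (complex_of_real (cos (x ?o))) (complex_of_real (sin (x ?o))) (G n ps x)) r)"
    by (rule LBU_ap1[OF LBU_su LBU_su M]) auto
  have A: "LBU ?K (\<lambda>x r. ap1 a (su (x (?o+1)) (x (?o+2)) (x (?o+3)))
            (ap1 b (su (x (?o+4)) (x (?o+5)) (x (?o+6)))
            (apMS a b (complex_of_real (cos (x ?o))) (complex_of_real (sin (x ?o))) (G n ps x))) r)"
    by (rule LBU_ap1[OF LBU_su LBU_su B]) auto
  then show ?case by (simp add: p)
qed



lemma window:
  fixes t s :: real
  assumes "0 \<le> s"
  shows "{k::nat. \<bar>real k - t\<bar> \<le> s} \<subseteq> {nat \<lceil>t - s\<rceil> .. nat \<lceil>t - s\<rceil> + nat \<lceil>2*s\<rceil>}"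
proof
  fix k assume "k \<in> {k::nat. \<bar>real k - t\<bar> \<le> s}"
  then have k: "t - s \<le> real k" "real k \<le> t + s" by auto
  have c1: "\<lceil>t - s\<rceil> \<le> int k" using k(1) by (simp add: ceiling_le_iff)
  have "real k \<le> (t - s) + 2*s" using k(2) by simp
  also have "\<dots> \<le> of_int \<lceil>t - s\<rceil> + of_int \<lceil>2*s\<rceil>"
    by (intro add_mono le_of_int_ceiling)
  finally have "real_of_int (int k) \<le> of_int (\<lceil>t - s\<rceil> + \<lceil>2*s\<rceil>)" by simp
  then have c2: "int k \<le> \<lceil>t - s\<rceil> + \<lceil>2*s\<rceil>" by linarith
  have p: "0 \<le> \<lceil>2*s\<rceil>" using assms by simp
  have "nat \<lceil>t - s\<rceil> \<le> k" using c1 by linarith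
  moreover have "k \<le> nat \<lceil>t - s\<rceil> + nat \<lceil>2*s\<rceil>" using c2 p by linarith
  ultimately show "k \<in> {nat \<lceil>t - s\<rceil> .. nat \<lceil>t - s\<rceil> + nat \<lceil>2*s\<rceil>}" by simp
qed

lemma window_finite: assumes "0 \<le> s" shows "finite {k::nat. \<bar>real k - t\<bar> \<le> s}"
  by (rule finite_subset[OF window[OF assms]]) simp

lemma window_card: "0 \<le> s \<Longrightarrow> card {k::nat. \<bar>real k - t\<bar> \<le> s} \<le> nat \<lceil>2*s\<rceil> + 1"
proof -
  assume s: "0 \<le> s"
  have "card {k::nat. \<bar>real k - t\<bar> \<le> s} \<le> card {nat \<lceil>t - s\<rceil> .. nat \<lceil>t - s\<rceil> + nat \<lceil>2*s\<rceil>}"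
    by (rule card_mono[OF _ window[OF s]]) simp
  then show ?thesis by simp
qed

lemma count_ineq:
  fixes M C K N :: nat
  assumes "K < N" "M = 3^K * C^N + 1"
  shows "(2*M+1)^K * C^N < M^N"
proof -
  have M1: "1 \<le> M" using assms(2) by simp
  have "(2*M+1)^K \<le> (3*M)^K" by (rule power_mono) (use M1 in auto)
  then have "(2*M+1)^K * C^N \<le> 3^K * M^K * C^N" by (simp add: power_mult_distrib)
  also have "\<dots> < M * M^K"
  proof -
    have "0 < M^K" using M1 by simp
    then have "3^K * C^N * M^K < (3^K * C^N + 1) * M^K" by simp
    then show ?thesis using assms(2) by (simp add: ac_simps)
  qed
  also have "\<dots> = M^(K+1)" by simp
  also have "\<dots> \<le> M^N" by (rule power_increasing) (use assms(1) M1 in auto)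
  finally show ?thesis .
qed

lemma grid_count:
  fixes h :: "(nat \<Rightarrow> real) \<Rightarrow> nat \<Rightarrow> real"
  assumes KN: "K < N" and R: "0 < R" and d: "0 < \<delta>" and L: "0 \<le> L"
    and lip: "\<And>x y e i. i < N \<Longrightarrow> 0 \<le> e \<Longrightarrow> (\<forall>j<K. \<bar>x j - y j\<bar> \<le> e) \<Longrightarrow> \<bar>h x i - h y i\<bar> \<le> L * e"
    and cover: "\<And>z. (\<forall>i<N. 0 \<le> z i \<and> z i \<le> \<delta>) \<Longrightarrow> \<exists>x. (\<forall>j<K. \<bar>x j\<bar> \<le> R) \<and> (\<forall>i<N. h x i = z i)"
  shows False
proof -
  define s where "s = L * R / \<delta>"
  have s0: "0 \<le> s" using L R d by (simp add: s_def)
  define C where "C = nat \<lceil>2*s\<rceil> + 1"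
  define M :: nat where "M = 3^K * C^N + 1"
  have M1: "1 \<le> M" by (simp add: M_def)
  have Mpos: "0 < real M" using M1 by simp
  define GI where "GI = PiE {..<K} (\<lambda>_. {0..2*M})"
  define gx where "gx g = (\<lambda>j. R * (real (g j) - real M) / real M)" for g :: "nat \<Rightarrow> nat"
  define TI where "TI = PiE {..<N} (\<lambda>_. {..<M})"
  define t where "t g i = real M / \<delta> * h (gx g) i" for g i
  define S where "S g = PiE {..<N} (\<lambda>i. {k::nat. \<bar>real k - t g i\<bar> \<le> s})" for g
  have sub: "TI \<subseteq> (\<Union>g\<in>GI. S g)"
  proof
    fix a assume a: "a \<in> TI"
    define z where "z i = \<delta> * real (a i) / real M" for i
    have "\<forall>i<N. 0 \<le> z i \<and> z i \<le> \<delta>"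
    proof (intro allI impI conjI)
      fix i assume "i < N"
      then have "a i < M" using a by (auto simp: TI_def PiE_def Pi_def)
      then have "real (a i) \<le> real M" by simp
      then have "\<delta> * real (a i) \<le> \<delta> * real M" using d by (intro mult_left_mono) auto
      then show "z i \<le> \<delta>" using Mpos by (simp add: z_def divide_le_eq)
      show "0 \<le> z i" using d by (simp add: z_def)
    qed
    then obtain x where x: "\<forall>j<K. \<bar>x j\<bar> \<le> R" "\<forall>i<N. h x i = z i" using cover by blast
    define g where "g = restrict (\<lambda>j. nat \<lfloor>(x j + R) * real M / R\<rfloor>) {..<K}"
    have gI: "g \<in> GI"
    proof -
      have "nat \<lfloor>(x j + R) * real M / R\<rfloor> \<le> 2*M" if "j < K" for j
      proof -
        have "x j + R \<le> 2 * R" using x(1) that by auto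
        then have "(x j + R) * real M \<le> 2 * R * real M" using Mpos by (intro mult_right_mono) auto
        then have "(x j + R) * real M / R \<le> 2 * real M" using R by (simp add: divide_le_eq mult.commute mult.left_commute)
        then have "\<lfloor>(x j + R) * real M / R\<rfloor> \<le> int (2*M)" by (simp add: floor_le_iff)
        then show ?thesis by linarith
      qed
      then show ?thesis by (auto simp: GI_def g_def)
    qed
    have close: "\<bar>x j - gx g j\<bar> \<le> R / real M" if "j < K" for j
    proof -
      define u where "u = (x j + R) * real M / R"
      have u0: "0 \<le> u" using x(1) that R Mpos by (auto simp: u_def)
      have gj: "real (g j) = of_int \<lfloor>u\<rfloor>" using that u0 by (simp add: g_def u_def)
      have xj: "x j = R * (u - real M) / real M" using R Mpos by (simp add: u_def field_simps)
      have "x j - gx g j = R * (u - of_int \<lfloor>u\<rfloor>) / real M" using Mpos by (simp add: xj gx_def gj field_simps)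
      moreover have "0 \<le> u - of_int \<lfloor>u\<rfloor>" "u - of_int \<lfloor>u\<rfloor> \<le> 1" by linarith+
      ultimately show ?thesis using R Mpos by (simp add: divide_le_cancel abs_of_nonneg mult_le_cancel_left1)
    qed
    have "a \<in> S g"
    proof -
      have "\<bar>real (a i) - t g i\<bar> \<le> s" if i: "i < N" for i
      proof -
        have "\<bar>h x i - h (gx g) i\<bar> \<le> L * (R / real M)"
          by (rule lip[OF i]) (use close R Mpos in auto)
        then have "\<bar>z i - h (gx g) i\<bar> \<le> L * (R / real M)" using x(2) i by simp
        then have "real M / \<delta> * \<bar>z i - h (gx g) i\<bar> \<le> real M / \<delta> * (L * (R / real M))"
          using Mpos d by (intro mult_left_mono) auto
        moreover have "real M / \<delta> * \<bar>z i - h (gx g) i\<bar> = \<bar>real (a i) - t g i\<bar>"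
          using Mpos d by (simp add: z_def t_def abs_mult field_simps)
        moreover have "real M / \<delta> * (L * (R / real M)) = s" using Mpos d by (simp add: s_def field_simps)
        ultimately show ?thesis by simp
      qed
      then show ?thesis using a by (auto simp: S_def TI_def PiE_def Pi_def)
    qed
    then show "a \<in> (\<Union>g\<in>GI. S g)" using gI by blast
  qed
  have fGI: "finite GI" by (simp add: GI_def finite_PiE)
  have fS: "finite (S g)" for g by (simp add: S_def finite_PiE window_finite[OF s0])
  have cS: "card (S g) \<le> C^N" for g
  proof -
    have "card (S g) = (\<Prod>i<N. card {k::nat. \<bar>real k - t g i\<bar> \<le> s})" by (simp add: S_def card_PiE)
    also have "\<dots> \<le> (\<Prod>i<N. C)" by (intro prod_mono) (use window_card[OF s0] in \<open>auto simp: C_def\<close>)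
    finally show ?thesis by simp
  qed
  have "M^N = card TI" by (simp add: TI_def card_PiE)
  also have "\<dots> \<le> card (\<Union>g\<in>GI. S g)" by (rule card_mono[OF _ sub]) (use fGI fS in auto)
  also have "\<dots> \<le> (\<Sum>g\<in>GI. card (S g))" by (rule card_UN_le[OF fGI])
  also have "\<dots> \<le> (\<Sum>g\<in>GI. C^N)" by (intro sum_mono cS)
  also have "\<dots> = (2*M+1)^K * C^N" by (simp add: GI_def card_PiE)
  finally have "M^N \<le> (2*M+1)^K * C^N" .
  with count_ineq[OF KN M_def] show False by simp
qed



lemma bound_K:
  assumes n: "n \<ge> 1" and h: "real m < (2 ^ (n+1) - 2 * real n - 2) / (2 * real n + 1)"
  shows "2*n + 7*m + 2 < 2^(n+1)"
proof -
  have pos: "0 < 2 * real n + 1" by simp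
  have h2: "real m * (2 * real n + 1) < 2 ^ (n+1) - 2 * real n - 2"
    using h pos by (simp add: pos_less_divide_eq)
  have "real (2*n + 7*m + 2) < real (2^(n+1) :: nat)"
  proof (cases "m = 0")
    case True
    then show ?thesis using h2 by simp
  next
    case False
    have n3: "n \<ge> 3"
    proof (rule ccontr)
      assume "\<not> n \<ge> 3"
      then have "n = 1 \<or> n = 2" using n by auto
      moreover have "1 \<le> real m" using False by simp
      ultimately show False using h2 by (auto simp: algebra_simps) 
    qed
    have "real (7*m) \<le> real m * (2 * real n + 1)"
    proof -
      have "7 \<le> 2 * real n + 1" using n3 by simp
      then have "real m * 7 \<le> real m * (2 * real n + 1)" by (intro mult_left_mono) auto
      then show ?thesis by simp
    qed
    then show ?thesis using h2 by simp
  qed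
  then show ?thesis by (simp only: of_nat_less_iff)
qed

lemma sum_sq_bound:
  fixes f :: "nat \<Rightarrow> complex"
  assumes "\<And>r. r < (2::nat)^n \<Longrightarrow> cmod (f r) ^ 2 \<le> b"
  shows "(\<Sum>r<(2::nat)^n. cmod (f r) ^ 2) \<le> 2^n * b"
proof -
  have "(\<Sum>r<2^n. cmod (f r) ^ 2) \<le> (\<Sum>r<(2::nat)^n. b)" by (intro sum_mono assms) simp
  then show ?thesis by simp
qed

theorem mainTheorem2:
  fixes n :: nat and gs :: "gate list"
  assumes "n \<ge> 1"
    and "\<forall>g\<in>set gs. wf_gate n g"
    and "\<forall>\<psi>. unit_state n \<psi> \<longrightarrow>
           (\<exists>x. length x = num_params gs \<and>
              (\<exists>c::complex. cmod c = 1 \<and>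
                 circ n gs x *\<^sub>v unit_vec (2^n) 0 = c \<cdot>\<^sub>v \<psi>))"
  shows "real (num_ms gs) \<ge>
           of_int \<lceil>(2 ^ (n+1) - 2 * real n - 2) / (2 * real n + 1)\<rceil>"
proof (rule ccontr)
  assume neg: "\<not> ?thesis"
  define m where "m = num_ms gs"
  have "int m < \<lceil>(2 ^ (n+1) - 2 * real n - 2) / (2 * real n + 1)\<rceil>"
    using neg by (simp add: m_def)
  then have "real m < (2 ^ (n+1) - 2 * real n - 2) / (2 * real n + 1)"
    by (simp add: less_ceiling_iff)
  then have KN: "2*n + 7*m + 2 < 2^(n+1)" by (rule bound_K[OF assms(1)])
  define ps where "ps = msp gs"
  define K where "K = 2*n + 7*m + 2"
  define N :: nat where "N = 2^(n+1)"
  have reachall: "valid n ps \<and> length ps = m \<and> reach n ps (circ n gs xs *\<^sub>v unit_vec (2^n) 0)" for xs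
    using circ_reach[OF assms(2) _ reach_init, of xs] by (simp add: ps_def m_def valid_def)
  define W where "W x r = complex_of_real (cos (x 0)) * cis (x 1) * G n ps (\<lambda>j. x (j+2)) r" for x r
  define hh where "hh x i = (if even i then Re (W x (i div 2)) else Im (W x (i div 2)))" for x i
  have lenps: "length ps = m" using reachall by blast
  have "LBU K W"
  proof -
    have g: "LBU K (\<lambda>x r. G n ps (\<lambda>j. x (j+2)) r)"
      using LBU_shift[OF LBU_G[of n ps], of 2] by (simp add: K_def lenps)
    have "LBU K (\<lambda>x r. complex_of_real (cos (x 0)) * cis (x 1) * G n ps (\<lambda>j. x (j+2)) r)"
      by (intro LBU_mult LBU_cos LBU_cis g) (auto simp: K_def)
    then show ?thesis by (simp add: W_def[abs_def])
  qed
  then obtain B L where BL: "0 \<le> L"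
    "\<And>x y e r. 0 \<le> e \<Longrightarrow> (\<forall>j<K. \<bar>x j - y j\<bar> \<le> e) \<Longrightarrow> cmod (W x r - W y r) \<le> L * e"
    by (rule LBU_E) blast
  have lip: "\<bar>hh x i - hh y i\<bar> \<le> L * e" if "i < N" "0 \<le> e" "\<forall>j<K. \<bar>x j - y j\<bar> \<le> e" for x y e i
  proof -
    have "\<bar>hh x i - hh y i\<bar> \<le> cmod (W x (i div 2) - W y (i div 2))"
      using abs_Re_le_cmod[of "W x (i div 2) - W y (i div 2)"] abs_Im_le_cmod[of "W x (i div 2) - W y (i div 2)"]
      by (simp add: hh_def)
    also have "\<dots> \<le> L * e" by (rule BL(2)[OF that(2,3)])
    finally show ?thesis .
  qed
  define \<delta> :: real where "\<delta> = 1 / real N"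
  have Npos: "0 < real N" by (simp add: N_def)
  have dpos: "0 < \<delta>" using Npos by (simp add: \<delta>_def)
  have cover: "\<exists>x. (\<forall>j<K. \<bar>x j\<bar> \<le> pi) \<and> (\<forall>i<N. hh x i = z i)"
    if z: "\<forall>i<N. 0 \<le> z i \<and> z i \<le> \<delta>" for z
  proof -
    define \<phi> where "\<phi> r = Complex (z (2*r)) (z (2*r+1))" for r
    define S where "S = (\<Sum>r<2^n. cmod (\<phi> r) ^ 2)"
    define nr where "nr = sqrt S"
    have S0: "0 \<le> S" by (simp add: S_def sum_nonneg)
    have ix: "2*r < N" "2*r+1 < N" if "r < 2^n" for r using that by (auto simp: N_def)
    have zz: "\<And>i. i < N \<Longrightarrow> z i * z i \<le> \<delta> * \<delta>"
      using z by (intro mult_mono) auto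
    have "S \<le> 2^n * (2 * (\<delta> * \<delta>))"
      unfolding S_def
    proof (rule sum_sq_bound)
      fix r :: nat assume r: "r < 2^n"
      have "cmod (\<phi> r) ^ 2 = z (2*r) * z (2*r) + z (2*r+1) * z (2*r+1)"
        by (simp add: \<phi>_def cmod_def power2_eq_square)
      also have "\<dots> \<le> 2 * (\<delta> * \<delta>)" using zz[OF ix(1)[OF r]] zz[OF ix(2)[OF r]] by simp
      finally show "cmod (\<phi> r) ^ 2 \<le> 2 * (\<delta> * \<delta>)" .
    qed
    also have "\<dots> = 1 / real N" using Npos by (simp add: \<delta>_def N_def field_simps)
    also have "\<dots> \<le> 1" using Npos by simp
    finally have S1: "S \<le> 1" .
    have nr0: "0 \<le> nr" and nr1: "nr \<le> 1" using S0 S1 by (auto simp: nr_def)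
    have zi: "z i = (if even i then Re (\<phi> (i div 2)) else Im (\<phi> (i div 2)))" for i
      by (cases "even i") (auto simp: \<phi>_def elim!: evenE oddE)
    show ?thesis
    proof (cases "nr = 0")
      case True
      then have "S = 0" using S0 by (simp add: nr_def)
      then have "\<forall>r\<in>{..<2^n}. cmod (\<phi> r) ^ 2 = 0" unfolding S_def
        by (subst sum_nonneg_eq_0_iff[symmetric]) auto
      then have p0: "\<phi> r = 0" if "r < 2^n" for r using that by auto
      define x where "x j = (if j = 0 then pi/2 else 0)" for j :: nat
      have "hh x i = z i" if "i < N" for i
      proof -
        have "i div 2 < 2^n" using that by (auto simp: N_def)
        then show ?thesis using p0 by (simp add: zi hh_def W_def x_def)
      qed
      moreover have "\<forall>j<K. \<bar>x j\<bar> \<le> pi" by (simp add: x_def)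
      ultimately show ?thesis by blast
    next
      case False
      then have nrp: "0 < nr" using nr0 by simp
      define \<psi> where "\<psi> = vec (2^n) (\<lambda>r. \<phi> r / complex_of_real nr)"
      have "unit_state n \<psi>"
      proof -
        have "(\<Sum>i<2^n. (cmod (\<psi> $ i))\<^sup>2) = (\<Sum>i<2^n. (cmod (\<phi> i))\<^sup>2 / nr^2)"
          by (intro sum.cong) (auto simp: \<psi>_def norm_divide power_divide)
        also have "\<dots> = S / nr^2" by (simp add: S_def sum_divide_distrib)
        also have "\<dots> = 1" using S0 nrp by (simp add: nr_def)
        finally show ?thesis by (simp add: unit_state_def \<psi>_def)
      qed
      then obtain xs c where c: "cmod c = 1" "circ n gs xs *\<^sub>v unit_vec (2^n) 0 = c \<cdot>\<^sub>v \<psi>"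
        using assms(3) by blast
      obtain c' y where c': "cmod c' = 1" "box y" "circ n gs xs *\<^sub>v unit_vec (2^n) 0 = vec (2^n) (\<lambda>r. c' * G n ps y r)"
        using reachall[of xs] by (auto simp: reach_def)
      have cne: "c \<noteq> 0" using c(1) by auto
      define q where "q = c' / c"
      have q1: "cmod q = 1" using c(1) c'(1) by (simp add: q_def norm_divide)
      have cisq: "cis (Arg q) = q"
      proof -
        have "q \<noteq> 0" using q1 by auto
        then show ?thesis using q1 by (simp add: cis_Arg sgn_div_norm)
      qed
      have phir: "\<phi> r = complex_of_real nr * q * G n ps y r" if r: "r < 2^n" for r
      proof -
        have "(c \<cdot>\<^sub>v \<psi>) $ r = vec (2^n) (\<lambda>r. c' * G n ps y r) $ r" using c(2) c'(3) by simp
        then have "c * (\<phi> r / complex_of_real nr) = c' * G n ps y r" using r by (simp add: \<psi>_def)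
        then show ?thesis using cne nrp by (simp add: q_def field_simps)
      qed
      define x where "x j = (if j = 0 then arccos nr else if j = 1 then Arg q else y (j - 2))" for j
      have xs2: "(\<lambda>j. x (j+2)) = y" by (simp add: x_def fun_eq_iff)
      have cnr: "cos (arccos nr) = nr" using nr0 nr1 by (simp add: cos_arccos)
      have Wx: "W x r = \<phi> r" if "r < 2^n" for r
        using phir[OF that] by (simp add: W_def xs2 x_def cnr cisq)
      have "hh x i = z i" if "i < N" for i
      proof -
        have "i div 2 < 2^n" using that by (auto simp: N_def)
        then show ?thesis by (simp add: zi hh_def Wx)
      qed
      moreover have "\<forall>j<K. \<bar>x j\<bar> \<le> pi"
      proof (intro allI impI)
        fix j :: nat
        have a1: "0 \<le> arccos nr" "arccos nr \<le> pi" using nr0 nr1 by (auto intro: arccos_lbound arccos_ubound)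
        have a2: "\<bar>Arg q\<bar> \<le> pi" using Arg_bounded[of q] by auto
        have a3: "\<bar>y (j - 2)\<bar> \<le> pi" using c'(2) by (simp add: box_def)
        show "\<bar>x j\<bar> \<le> pi" using a1 a2 a3 by (simp add: x_def)
      qed
      ultimately show ?thesis by blast
    qed
  qed
  show False
    by (rule grid_count[of K N pi \<delta> L hh])
       (use KN lip cover dpos BL(1) in \<open>auto simp: K_def N_def\<close>)
qed


end
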